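(* For all integers $n,d,p\ge 0$, $$P_p(n,\omega^d)=\begin{cases}0 & d=0,\ n\ge 2\\ 1 & n=0,\ p=0\\ 0 & n=0,\ p\ge 1\\ 1 & d=0,\ n=1,\ p=0\\ 0 & d=0,\ n=1,\ p\ge 1\\ 1 & d=1,\ n\ge 1,\ n=p\\ 0 & d=1,\ n\ge1,\ n\ne p\\ 0 & d\ge 2,\ n\ge 1,\ p=0\\ \displaystyle\sum_{j=1}^{n}\sum_{i=0}^{p-1}\binom{p-1}{i}P_i(j,\omega^{d-1})\,P_{p-1-i}(n-j,\omega^{d}) & d\ge2,\ n\ge1,\ p\ge1.\end{cases}$$
   Context: Coloring rules. Fix integers $n,d,k\ge 0$. Every ordinal $\beta<\omega^d\cdot k$ is uniquely written $\beta=\omega^d\cdot b+\omega^{d-1}a_{d-1}+\cdots+\omega a_1+a_0$ with $0\le b<k$ and $a_j\in\mathbb{N}$. A coloring rule (CR) on $\binom{\omega^d\cdot k}{n}$ is a pair $(\mathcal{Y},\preceq)$ where $\mathcal{Y}:\{1,\dots,n\}\to\{0,\dots,k-1\}$ (one writes $b_i=\mathcal{Y}(i)$) and $\preceq$ is a total preorder on the index set $I=\{(i,j):1\le i\le n,\ 0\le j<d\}$ (one thinks of $(i,j)$ as a variable $a_{i,j}$; write $(i,j)\equiv(i',j')$ if both $(i,j)\preceq(i',j')$ and $(i',j')\preceq(i,j)$, and $(i,j)\prec(i',j')$ if $(i,j)\preceq(i',j')$ but not $(i',j')\preceq(i,j)$), satisfying: (1) if $d\ge1$ then $(i,0)\prec(i',0)$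 whenever $i<i'$; if $d=0$ then $\mathcal{Y}(i)<\mathcal{Y}(i')$ whenever $i<i'$; (2) if $(i,j)\equiv(i',j)$ for some $j$, then $\mathcal{Y}(i)=\mathcal{Y}(i')$; (3) $(i,j)\prec(i,j')$ whenever $j>j'$; (4) $(i,j)\equiv(i',j')$ implies $j=j'$; (5) for $j>0$, if $(i,j)\not\equiv(i',j)$ then $(i,j-1)\not\equiv(i',j-1)$. The size of a CR is the number of $\equiv$-equivalence classes of $I$. $P_p(n,\omega^d\cdot k)$ denotes the number of CRs of size $p$ on $\binom{\omega^d\cdot k}{n}$, and $P_p(n,\omega^d)$ means $P_p(n,\omega^d\cdot 1)$ (so all $b_i=0$). *)

theory Defs
  imports "HOL-Library.FuncSet"
begin

definition CR_index :: "nat \<Rightarrow> nat \<Rightarrow> (nat \<times> nat) set" where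
  "CR_index n d = {1..n} \<times> {0..<d}"

text \<open>A coloring rule on [omega^d * k]^n: a pair (Y, R), where Y : {1..n} -> {0..k-1}
  (extensional function) and R is a total preorder on the index set,
  (x,y) \<in> R meaning x \<preceq> y.\<close>
definition is_CR ::
  "nat \<Rightarrow> nat \<Rightarrow> nat \<Rightarrow> (nat \<Rightarrow> nat) \<Rightarrow> ((nat \<times> nat) \<times> (nat \<times> nat)) set \<Rightarrow> bool" where
  "is_CR n d k Y R \<longleftrightarrow>
     (let I = CR_index n d;
          eqv = (\<lambda>x y. (x,y) \<in> R \<and> (y,x) \<in> R);
          lt = (\<lambda>x y. (x,y) \<in> R \<and> (y,x) \<notin> R)
      in Y \<in> {1..n} \<rightarrow>\<^sub>E {0..<k}
       \<and> R \<subseteq> I \<times> I \<and> refl_on I R \<and> trans R \<and> total_on I R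
       \<and> (d \<ge> 1 \<longrightarrow> (\<forall>i\<in>{1..n}. \<forall>i'\<in>{1..n}. i < i' \<longrightarrow> lt (i,0) (i',0)))
       \<and> (d = 0 \<longrightarrow> (\<forall>i\<in>{1..n}. \<forall>i'\<in>{1..n}. i < i' \<longrightarrow> Y i < Y i'))
       \<and> (\<forall>i\<in>{1..n}. \<forall>i'\<in>{1..n}. \<forall>j<d. eqv (i,j) (i',j) \<longrightarrow> Y i = Y i')
       \<and> (\<forall>i\<in>{1..n}. \<forall>j<d. \<forall>j'<d. j > j' \<longrightarrow> lt (i,j) (i,j'))
       \<and> (\<forall>x\<in>I. \<forall>y\<in>I. eqv x y \<longrightarrow> snd x = snd y)
       \<and> (\<forall>i\<in>{1..n}. \<forall>i'\<in>{1..n}. \<forall>j. 0 < j \<and> j < d \<longrightarrow>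
              \<not> eqv (i,j) (i',j) \<longrightarrow> \<not> eqv (i,j-1) (i',j-1)))"

definition CR_size :: "nat \<Rightarrow> nat \<Rightarrow> ((nat \<times> nat) \<times> (nat \<times> nat)) set \<Rightarrow> nat" where
  "CR_size n d R = card (CR_index n d // (R \<inter> R\<inverse>))"

text \<open>P_p(n, omega^d * k): number of CRs of size p.\<close>
definition P :: "nat \<Rightarrow> nat \<Rightarrow> nat \<Rightarrow> nat \<Rightarrow> nat" where
  "P p n d k = card {(Y, R). is_CR n d k Y R \<and> CR_size n d R = p}"

end

theory Submission
  imports Defs
begin

definition smono :: "'a::linorder set \<Rightarrow> ('a \<Rightarrow> 'b::linorder) \<Rightarrow> bool" where
  "smono A f \<longleftrightarrow> (\<forall>x\<in>A. \<forall>y\<in>A. x < y \<longrightarrow> f x < f y)"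

definition rk :: "'a::linorder set \<Rightarrow> 'a \<Rightarrow> nat" where
  "rk W w = card {w'\<in>W. w' < w}"

lemma smono_iff: "smono A f \<Longrightarrow> x \<in> A \<Longrightarrow> y \<in> A \<Longrightarrow> (f x < f y) = (x < y)"
  unfolding smono_def by (metis linorder_neq_iff order_less_asym')

lemma smono_le_iff: "smono A f \<Longrightarrow> x \<in> A \<Longrightarrow> y \<in> A \<Longrightarrow> (f x \<le> f y) = (x \<le> y)"
  by (meson not_le smono_iff)

lemma smono_inj: "smono A f \<Longrightarrow> inj_on f A"
  unfolding inj_on_def by (metis less_irrefl smono_iff linorder_neq_iff)

lemma rk_smono: "finite W \<Longrightarrow> smono W (rk W)"
  unfolding smono_def rk_def
  by (auto intro!: psubset_card_mono)

lemma rk_lt: "finite W \<Longrightarrow> w \<in> W \<Longrightarrow> rk W w < card W"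
  unfolding rk_def by (auto intro!: psubset_card_mono)

lemma rk_bij: "finite W \<Longrightarrow> bij_betw (rk W) W {0..<card W}"
proof -
  assume f: "finite W"
  have inj: "inj_on (rk W) W" using smono_inj[OF rk_smono[OF f]] .
  have "rk W ` W \<subseteq> {0..<card W}" using rk_lt[OF f] by auto
  moreover have "card (rk W ` W) = card {0..<card W}" using card_image[OF inj] by simp
  ultimately have "rk W ` W = {0..<card W}" by (simp add: card_subset_eq)
  thus ?thesis using inj by (simp add: bij_betw_def)
qed

lemma smono_bij_rk:
  assumes fa: "finite A" and b: "bij_betw h A B" and s: "smono A h" and a: "a \<in> A"
  shows "rk B (h a) = rk A a"
proof -
  have "{w\<in>B. w < h a} = h ` {w\<in>A. w < a}"
  proof
    show "{w \<in> B. w < h a} \<subseteq> h ` {w \<in> A. w < a}"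
    proof
      fix w assume w: "w \<in> {w \<in> B. w < h a}"
      then obtain w' where "w' \<in> A" "w = h w'" using b unfolding bij_betw_def by auto
      thus "w \<in> h ` {w \<in> A. w < a}" using w smono_iff[OF s _ a] by auto
    qed
  next
    show "h ` {w \<in> A. w < a} \<subseteq> {w \<in> B. w < h a}"
      using b smono_iff[OF s _ a] unfolding bij_betw_def by auto
  qed
  moreover have "inj_on h {w\<in>A. w < a}" using b unfolding bij_betw_def by (auto intro: inj_on_subset)
  ultimately show ?thesis unfolding rk_def by (simp add: card_image)
qed

lemma smono_bij_self_id:
  assumes fa: "finite A" and b: "bij_betw h A A" and s: "smono A h" and a: "a \<in> A"
  shows "h a = a"
proof -
  have "rk A (h a) = rk A a" using smono_bij_rk[OF fa b s a] .
  moreover have "h a \<in> A" using b a unfolding bij_betw_def by auto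
  ultimately show ?thesis using smono_inj[OF rk_smono[OF fa]] a unfolding inj_on_def by blast
qed

lemma smono_inv:
  assumes b: "bij_betw h A B" and s: "smono A h"
  shows "smono B (inv_into A h)"
  unfolding smono_def
proof (intro ballI impI)
  fix x y assume x: "x \<in> B" and y: "y \<in> B" and xy: "x < y"
  have ix: "inv_into A h x \<in> A" "h (inv_into A h x) = x" using b x
    by (auto simp: bij_betw_def inv_into_into f_inv_into_f)
  have iy: "inv_into A h y \<in> A" "h (inv_into A h y) = y" using b y
    by (auto simp: bij_betw_def inv_into_into f_inv_into_f)
  show "inv_into A h x < inv_into A h y" using smono_iff[OF s ix(1) iy(1)] ix iy xy by simp
qed

lemma exists_smono_bij:
  assumes fA: "finite A" and fB: "finite B" and c: "card A = card B"
  shows "\<exists>h. bij_betw h A B \<and> smono A h"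
proof -
  define g where "g = inv_into B (rk B)"
  have b1: "bij_betw (rk A) A {0..<card B}" using rk_bij[OF fA] c by simp
  have b2: "bij_betw g {0..<card B} B" unfolding g_def by (rule bij_betw_inv_into[OF rk_bij[OF fB]])
  have sg: "smono {0..<card B} g" unfolding g_def by (rule smono_inv[OF rk_bij[OF fB] rk_smono[OF fB]])
  have "bij_betw (g \<circ> rk A) A B" using bij_betw_trans[OF b1 b2] .
  moreover have "smono A (g \<circ> rk A)"
    unfolding smono_def
  proof (intro ballI impI)
    fix x y assume x: "x \<in> A" and y: "y \<in> A" and xy: "x < y"
    have "rk A x < rk A y" using rk_smono[OF fA] x y xy unfolding smono_def by blast
    moreover have "rk A x \<in> {0..<card B}" "rk A y \<in> {0..<card B}"
      using rk_lt[OF fA] x y c by auto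
    ultimately have "g (rk A x) < g (rk A y)" using sg unfolding smono_def by blast
    thus "(g \<circ> rk A) x < (g \<circ> rk A) y" by simp
  qed
  ultimately show ?thesis by blast
qed

lemma card_image_same_kernel:
  assumes "finite I" "\<forall>x\<in>I. \<forall>y\<in>I. (\<phi> x = \<phi> y) = (\<psi> x = \<psi> y)"
  shows "card (\<phi> ` I) = card (\<psi> ` I)"
proof -
  have "bij_betw (\<lambda>v. \<psi> (inv_into I \<phi> v)) (\<phi> ` I) (\<psi> ` I)"
    unfolding bij_betw_def inj_on_def
  proof (intro conjI ballI impI)
    fix a b assume a: "a \<in> \<phi> ` I" and b: "b \<in> \<phi> ` I" and e: "\<psi> (inv_into I \<phi> a) = \<psi> (inv_into I \<phi> b)"
    have "inv_into I \<phi> a \<in> I" "inv_into I \<phi> b \<in> I" using a b by (auto simp: inv_into_into)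
    hence "\<phi> (inv_into I \<phi> a) = \<phi> (inv_into I \<phi> b)" using assms(2) e by blast
    thus "a = b" using a b by (simp add: f_inv_into_f)
  next
    show "(\<lambda>v. \<psi> (inv_into I \<phi> v)) ` \<phi> ` I = \<psi> ` I"
    proof
      show "(\<lambda>v. \<psi> (inv_into I \<phi> v)) ` \<phi> ` I \<subseteq> \<psi> ` I" by (auto simp: inv_into_into)
      show "\<psi> ` I \<subseteq> (\<lambda>v. \<psi> (inv_into I \<phi> v)) ` \<phi> ` I"
      proof
        fix w assume "w \<in> \<psi> ` I"
        then obtain x where x: "x \<in> I" "w = \<psi> x" by auto
        have "inv_into I \<phi> (\<phi> x) \<in> I" "\<phi> (inv_into I \<phi> (\<phi> x)) = \<phi> x" using x by (auto simp: inv_into_into f_inv_into_f)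
        hence "\<psi> (inv_into I \<phi> (\<phi> x)) = \<psi> x" using assms(2) x by blast
        thus "w \<in> (\<lambda>v. \<psi> (inv_into I \<phi> v)) ` \<phi> ` I" using x by force
      qed
    qed
  qed
  thus ?thesis by (rule bij_betw_same_card)
qed

definition Ix :: "nat set \<Rightarrow> nat \<Rightarrow> (nat \<times> nat) set" where
  "Ix S d = S \<times> {0..<d}"

definition G :: "nat set \<Rightarrow> nat \<Rightarrow> nat set \<Rightarrow> (nat \<times> nat \<Rightarrow> nat) \<Rightarrow> bool" where
  "G S d V f \<longleftrightarrow> f \<in> Ix S d \<rightarrow>\<^sub>E V \<and> f ` Ix S d = V
    \<and> (\<forall>i\<in>S. \<forall>i'\<in>S. i < i' \<longrightarrow> f (i,0) < f (i',0))
    \<and> (\<forall>i\<in>S. \<forall>j<d. \<forall>j'<j. f (i,j) < f (i,j'))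
    \<and> (\<forall>x\<in>Ix S d. \<forall>y\<in>Ix S d. f x = f y \<longrightarrow> snd x = snd y)
    \<and> (\<forall>i\<in>S. \<forall>i'\<in>S. \<forall>j. 0 < j \<and> j < d \<longrightarrow> f (i,j-1) = f (i',j-1) \<longrightarrow> f (i,j) = f (i',j))"

definition Gs where "Gs S d V = {f. G S d V f}"
definition Ms where "Ms L d V = {f. G L d V f \<and> (\<forall>l\<in>L. f (l,0) = l)}"

definition tr :: "(nat \<Rightarrow> nat) \<Rightarrow> (nat \<Rightarrow> nat) \<Rightarrow> nat set \<Rightarrow> nat \<Rightarrow> (nat \<times> nat \<Rightarrow> nat) \<Rightarrow> (nat \<times> nat \<Rightarrow> nat)" where
  "tr \<alpha> \<beta> S' d f = (\<lambda>x. if x \<in> Ix S' d then \<beta> (f (\<alpha> (fst x), snd x)) else undefined)"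

lemma G_PiE: "G S d V f \<Longrightarrow> f \<in> Ix S d \<rightarrow>\<^sub>E V" by (simp add: G_def)
lemma G_onto: "G S d V f \<Longrightarrow> f ` Ix S d = V" by (simp add: G_def)
lemma G_ext: "G S d V f \<Longrightarrow> x \<notin> Ix S d \<Longrightarrow> f x = undefined"
  by (rule PiE_arb[OF G_PiE])

lemma G_val: "G S d V f \<Longrightarrow> i \<in> S \<Longrightarrow> j < d \<Longrightarrow> f (i,j) \<in> V"
proof -
  assume g: "G S d V f" "i \<in> S" "j < d"
  hence "(i,j) \<in> Ix S d" by (simp add: Ix_def)
  thus ?thesis using G_PiE[OF g(1)] by (rule PiE_mem[rotated])
qed
lemma G_c1: "G S d V f \<Longrightarrow> i \<in> S \<Longrightarrow> i' \<in> S \<Longrightarrow> i < i' \<Longrightarrow> f (i,0) < f (i',0)"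
  unfolding G_def by blast
lemma G_c3: "G S d V f \<Longrightarrow> i \<in> S \<Longrightarrow> j < d \<Longrightarrow> j' < j \<Longrightarrow> f (i,j) < f (i,j')"
  unfolding G_def by blast
lemma G_c4: "G S d V f \<Longrightarrow> i \<in> S \<Longrightarrow> i' \<in> S \<Longrightarrow> j < d \<Longrightarrow> j' < d \<Longrightarrow> f (i,j) = f (i',j') \<Longrightarrow> j = j'"
proof -
  assume g: "G S d V f" "i \<in> S" "i' \<in> S" "j < d" "j' < d" "f (i,j) = f (i',j')"
  hence "(i,j) \<in> Ix S d" "(i',j') \<in> Ix S d" by (auto simp: Ix_def)
  moreover have "\<forall>x\<in>Ix S d. \<forall>y\<in>Ix S d. f x = f y \<longrightarrow> snd x = snd y" using g(1) unfolding G_def by blast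
  ultimately show ?thesis using g(6) by fastforce
qed
lemma G_c5: "G S d V f \<Longrightarrow> i \<in> S \<Longrightarrow> i' \<in> S \<Longrightarrow> 0 < j \<Longrightarrow> j < d \<Longrightarrow> f (i,j-1) = f (i',j-1) \<Longrightarrow> f (i,j) = f (i',j)"
  unfolding G_def by blast

lemma GI:
  assumes "f \<in> Ix S d \<rightarrow>\<^sub>E V" "f ` Ix S d = V"
    "\<And>i i'. i \<in> S \<Longrightarrow> i' \<in> S \<Longrightarrow> i < i' \<Longrightarrow> f (i,0) < f (i',0)"
    "\<And>i j j'. i \<in> S \<Longrightarrow> j < d \<Longrightarrow> j' < j \<Longrightarrow> f (i,j) < f (i,j')"
    "\<And>i i' j j'. i \<in> S \<Longrightarrow> i' \<in> S \<Longrightarrow> j < d \<Longrightarrow> j' < d \<Longrightarrow> f (i,j) = f (i',j') \<Longrightarrow> j = j'"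
    "\<And>i i' j. i \<in> S \<Longrightarrow> i' \<in> S \<Longrightarrow> 0 < j \<Longrightarrow> j < d \<Longrightarrow> f (i,j-1) = f (i',j-1) \<Longrightarrow> f (i,j) = f (i',j)"
  shows "G S d V f"
  unfolding G_def
proof (intro conjI)
  show "f \<in> Ix S d \<rightarrow>\<^sub>E V" by (rule assms(1))
  show "f ` Ix S d = V" by (rule assms(2))
  show "\<forall>i\<in>S. \<forall>i'\<in>S. i < i' \<longrightarrow> f (i, 0) < f (i', 0)" using assms(3) by blast
  show "\<forall>i\<in>S. \<forall>j<d. \<forall>j'<j. f (i, j) < f (i, j')" using assms(4) by blast
  show "\<forall>i\<in>S. \<forall>i'\<in>S. \<forall>j. 0 < j \<and> j < d \<longrightarrow> f (i, j - 1) = f (i', j - 1) \<longrightarrow> f (i, j) = f (i', j)"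
    using assms(6) by blast
  show "\<forall>x\<in>Ix S d. \<forall>y\<in>Ix S d. f x = f y \<longrightarrow> snd x = snd y"
  proof (intro ballI impI)
    fix x y assume x: "x \<in> Ix S d" and y: "y \<in> Ix S d" and e: "f x = f y"
    obtain i j where xi: "x = (i,j)" "i \<in> S" "j < d" using x by (auto simp: Ix_def)
    obtain i' j' where yi: "y = (i',j')" "i' \<in> S" "j' < d" using y by (auto simp: Ix_def)
    show "snd x = snd y" using assms(5)[OF xi(2) yi(2) xi(3) yi(3)] e xi yi by simp
  qed
qed

lemma finite_Gs: "finite S \<Longrightarrow> finite V \<Longrightarrow> finite (Gs S d V)"
proof -
  assume f: "finite S" "finite V"
  have "Gs S d V \<subseteq> Ix S d \<rightarrow>\<^sub>E V" unfolding Gs_def using G_PiE by blast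
  moreover have "finite (Ix S d \<rightarrow>\<^sub>E V)" using f by (intro finite_PiE) (auto simp: Ix_def)
  ultimately show ?thesis by (rule finite_subset)
qed

lemma finite_Ms: "finite S \<Longrightarrow> finite V \<Longrightarrow> finite (Ms S d V)"
  by (rule finite_subset[OF _ finite_Gs[of S V d]]) (unfold Gs_def Ms_def, blast)

lemma tr_G:
  assumes a: "bij_betw \<alpha> S' S" "smono S' \<alpha>" and b: "bij_betw \<beta> V V'" "smono V \<beta>"
    and g: "G S d V f"
  shows "G S' d V' (tr \<alpha> \<beta> S' d f)"
proof -
  have aS: "\<And>i. i \<in> S' \<Longrightarrow> \<alpha> i \<in> S" using a by (auto simp: bij_betw_def)
  have bV: "\<And>v. v \<in> V \<Longrightarrow> \<beta> v \<in> V'" using b by (auto simp: bij_betw_def)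
  have binj: "\<And>u v. u \<in> V \<Longrightarrow> v \<in> V \<Longrightarrow> \<beta> u = \<beta> v \<Longrightarrow> u = v" using b by (auto simp: bij_betw_def inj_on_def)
  have t: "\<And>i j. i \<in> S' \<Longrightarrow> j < d \<Longrightarrow> tr \<alpha> \<beta> S' d f (i,j) = \<beta> (f (\<alpha> i, j))"
    by (simp add: tr_def Ix_def)
  have ext: "tr \<alpha> \<beta> S' d f \<in> Ix S' d \<rightarrow>\<^sub>E V'"
  proof (rule PiE_I)
    fix x assume "x \<in> Ix S' d"
    then obtain i j where x: "x = (i,j)" "i \<in> S'" "j < d" by (auto simp: Ix_def)
    show "tr \<alpha> \<beta> S' d f x \<in> V'" using t[OF x(2,3)] x bV G_val[OF g aS[OF x(2)] x(3)] by simp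
  next
    fix x assume "x \<notin> Ix S' d"
    thus "tr \<alpha> \<beta> S' d f x = undefined" by (simp add: tr_def)
  qed
  have onto: "tr \<alpha> \<beta> S' d f ` Ix S' d = V'"
  proof
    show "tr \<alpha> \<beta> S' d f ` Ix S' d \<subseteq> V'" using ext by auto
    show "V' \<subseteq> tr \<alpha> \<beta> S' d f ` Ix S' d"
    proof
      fix w assume "w \<in> V'"
      then obtain v where v: "v \<in> V" "w = \<beta> v" using b by (auto simp: bij_betw_def)
      then obtain x where x: "x \<in> Ix S d" "v = f x" using G_onto[OF g] by blast
      then obtain i j where ij: "i \<in> S" "j < d" "v = f (i,j)" by (auto simp: Ix_def)
      then obtain i' where i': "i' \<in> S'" "\<alpha> i' = i" using a by (auto simp: bij_betw_def)
      have "w = tr \<alpha> \<beta> S' d f (i',j)" using t[OF i'(1) ij(2)] i' ij v by simp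
      moreover have "(i',j) \<in> Ix S' d" using i' ij by (simp add: Ix_def)
      ultimately show "w \<in> tr \<alpha> \<beta> S' d f ` Ix S' d" by blast
    qed
  qed
  show ?thesis
  proof (rule GI[OF ext onto])
    fix i i' assume i: "i \<in> S'" "i' \<in> S'" "i < i'"
    have "\<alpha> i < \<alpha> i'" using a(2) i unfolding smono_def by blast
    hence lt: "f (\<alpha> i, 0) < f (\<alpha> i', 0)" using G_c1[OF g aS aS] i by blast
    show "tr \<alpha> \<beta> S' d f (i,0) < tr \<alpha> \<beta> S' d f (i',0)"
    proof (cases "0 < d")
      case True
      have "\<beta> (f (\<alpha> i, 0)) < \<beta> (f (\<alpha> i', 0))"
        using smono_iff[OF b(2) G_val[OF g aS[OF i(1)] True] G_val[OF g aS[OF i(2)] True]] lt by simp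
      thus ?thesis using t[OF i(1) True] t[OF i(2) True] by simp
    next
      case False
      hence "(\<alpha> i,0) \<notin> Ix S d" "(\<alpha> i',0) \<notin> Ix S d" by (auto simp: Ix_def)
      hence "f (\<alpha> i,0) = f (\<alpha> i',0)" using G_ext[OF g] by simp
      thus ?thesis using lt by simp
    qed
  next
    fix i j j' assume i: "i \<in> S'" and j: "j < d" "j' < j"
    have lt: "f (\<alpha> i, j) < f (\<alpha> i, j')" using G_c3[OF g aS[OF i] j] .
    have j': "j' < d" using j by simp
    have "\<beta> (f (\<alpha> i, j)) < \<beta> (f (\<alpha> i, j'))"
      using smono_iff[OF b(2) G_val[OF g aS[OF i] j(1)] G_val[OF g aS[OF i] j']] lt by simp
    thus "tr \<alpha> \<beta> S' d f (i,j) < tr \<alpha> \<beta> S' d f (i,j')" using t[OF i j(1)] t[OF i j'] by simp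
  next
    fix i i' j j' assume i: "i \<in> S'" "i' \<in> S'" and j: "j < d" "j' < d"
      and e: "tr \<alpha> \<beta> S' d f (i,j) = tr \<alpha> \<beta> S' d f (i',j')"
    have "f (\<alpha> i, j) = f (\<alpha> i', j')"
      using binj[OF G_val[OF g aS[OF i(1)] j(1)] G_val[OF g aS[OF i(2)] j(2)]] e t[OF i(1) j(1)] t[OF i(2) j(2)] by simp
    thus "j = j'" using G_c4[OF g aS[OF i(1)] aS[OF i(2)] j] by simp
  next
    fix i i' j assume i: "i \<in> S'" "i' \<in> S'" and j: "0 < j" "j < d"
      and e: "tr \<alpha> \<beta> S' d f (i,j-1) = tr \<alpha> \<beta> S' d f (i',j-1)"
    have j1: "j - 1 < d" using j by simp
    have "f (\<alpha> i, j-1) = f (\<alpha> i', j-1)"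
      using binj[OF G_val[OF g aS[OF i(1)] j1] G_val[OF g aS[OF i(2)] j1]] e t[OF i(1) j1] t[OF i(2) j1] by simp
    hence "f (\<alpha> i, j) = f (\<alpha> i', j)" using G_c5[OF g aS[OF i(1)] aS[OF i(2)] j] by simp
    thus "tr \<alpha> \<beta> S' d f (i,j) = tr \<alpha> \<beta> S' d f (i',j)" using t[OF i(1) j(2)] t[OF i(2) j(2)] by simp
  qed
qed

lemma tr_at: "x \<in> Ix S' d \<Longrightarrow> tr \<alpha> \<beta> S' d f x = \<beta> (f (\<alpha> (fst x), snd x))"
  by (simp add: tr_def)
lemma tr_out: "x \<notin> Ix S' d \<Longrightarrow> tr \<alpha> \<beta> S' d f x = undefined"
  by (simp add: tr_def)

lemma tr_inv2:
  assumes a: "bij_betw \<alpha> S' S" and b: "bij_betw \<beta> V V'" and g: "G S d V f"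
  shows "tr (inv_into S' \<alpha>) (inv_into V \<beta>) S d (tr \<alpha> \<beta> S' d f) = f"
proof
  fix x
  show "tr (inv_into S' \<alpha>) (inv_into V \<beta>) S d (tr \<alpha> \<beta> S' d f) x = f x"
  proof (cases "x \<in> Ix S d")
    case True
    then obtain i j where x: "x = (i,j)" "i \<in> S" "j < d" by (auto simp: Ix_def)
    have i1: "inv_into S' \<alpha> i \<in> S'" using a x(2) by (metis bij_betw_def inv_into_into)
    have i2: "\<alpha> (inv_into S' \<alpha> i) = i" using a x(2) by (metis bij_betw_def f_inv_into_f)
    have fv: "f (i,j) \<in> V" by (rule G_val[OF g x(2,3)])
    have iv: "inv_into V \<beta> (\<beta> (f (i,j))) = f (i,j)" using inv_into_f_f[OF bij_betw_imp_inj_on[OF b] fv] .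
    have in1: "(inv_into S' \<alpha> i, j) \<in> Ix S' d" using i1 x(3) by (simp add: Ix_def)
    have "tr (inv_into S' \<alpha>) (inv_into V \<beta>) S d (tr \<alpha> \<beta> S' d f) x
        = inv_into V \<beta> (tr \<alpha> \<beta> S' d f (inv_into S' \<alpha> i, j))" using tr_at[OF True] x by simp
    also have "\<dots> = inv_into V \<beta> (\<beta> (f (i,j)))" using tr_at[OF in1] i2 by simp
    finally show ?thesis using iv x by simp
  next
    case False
    thus ?thesis using G_ext[OF g False] tr_out[OF False] by simp
  qed
qed

lemma tr_inv3:
  assumes a: "bij_betw \<alpha> S' S" and b: "bij_betw \<beta> V V'" and g: "G S' d V' g"
  shows "tr \<alpha> \<beta> S' d (tr (inv_into S' \<alpha>) (inv_into V \<beta>) S d g) = g"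
proof
  fix x
  show "tr \<alpha> \<beta> S' d (tr (inv_into S' \<alpha>) (inv_into V \<beta>) S d g) x = g x"
  proof (cases "x \<in> Ix S' d")
    case True
    then obtain i j where x: "x = (i,j)" "i \<in> S'" "j < d" by (auto simp: Ix_def)
    have ai: "\<alpha> i \<in> S" using a x(2) by (metis bij_betw_def imageI)
    have ai2: "inv_into S' \<alpha> (\<alpha> i) = i" using a x(2) by (metis bij_betw_def inv_into_f_f)
    have gv: "g (i,j) \<in> V'" by (rule G_val[OF g x(2,3)])
    have bb: "\<beta> (inv_into V \<beta> (g (i,j))) = g (i,j)" using gv b by (metis bij_betw_def f_inv_into_f)
    have in1: "(\<alpha> i, j) \<in> Ix S d" using ai x(3) by (simp add: Ix_def)
    have "tr \<alpha> \<beta> S' d (tr (inv_into S' \<alpha>) (inv_into V \<beta>) S d g) x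
       = \<beta> (tr (inv_into S' \<alpha>) (inv_into V \<beta>) S d g (\<alpha> i, j))" using tr_at[OF True] x by simp
    also have "\<dots> = \<beta> (inv_into V \<beta> (g (i,j)))" using tr_at[OF in1] ai2 by simp
    finally show ?thesis using bb x by simp
  next
    case False
    thus ?thesis using G_ext[OF g False] tr_out[OF False] by simp
  qed
qed

lemma smono_inv': "bij_betw h A B \<Longrightarrow> smono A h \<Longrightarrow> bij_betw (inv_into A h) B A \<and> smono B (inv_into A h)"
  using bij_betw_inv_into smono_inv by blast

lemma card_Gs_transport:
  assumes a: "bij_betw \<alpha> S' S" "smono S' \<alpha>" and b: "bij_betw \<beta> V V'" "smono V \<beta>"
  shows "card (Gs S d V) = card (Gs S' d V')"
proof (rule bij_betw_same_card[of "tr \<alpha> \<beta> S' d"])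
  have a': "bij_betw (inv_into S' \<alpha>) S S'" "smono S (inv_into S' \<alpha>)"
    using smono_inv'[OF a] by auto
  have b': "bij_betw (inv_into V \<beta>) V' V" "smono V' (inv_into V \<beta>)"
    using smono_inv'[OF b] by auto
  show "bij_betw (tr \<alpha> \<beta> S' d) (Gs S d V) (Gs S' d V')"
  proof (rule bij_betw_byWitness[where f'="tr (inv_into S' \<alpha>) (inv_into V \<beta>) S d"])
    show "\<forall>f\<in>Gs S d V. tr (inv_into S' \<alpha>) (inv_into V \<beta>) S d (tr \<alpha> \<beta> S' d f) = f"
      using tr_inv2[OF a(1) b(1)] unfolding Gs_def by blast
    show "tr \<alpha> \<beta> S' d ` Gs S d V \<subseteq> Gs S' d V'"
      using tr_G[OF a b] unfolding Gs_def by blast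
    show "tr (inv_into S' \<alpha>) (inv_into V \<beta>) S d ` Gs S' d V' \<subseteq> Gs S d V"
      using tr_G[OF a' b'] unfolding Gs_def by blast
    show "\<forall>g\<in>Gs S' d V'. tr \<alpha> \<beta> S' d (tr (inv_into S' \<alpha>) (inv_into V \<beta>) S d g) = g"
    proof
      fix g assume "g \<in> Gs S' d V'"
      hence g: "G S' d V' g" by (simp add: Gs_def)
      show "tr \<alpha> \<beta> S' d (tr (inv_into S' \<alpha>) (inv_into V \<beta>) S d g) = g"
        by (rule tr_inv3[OF a(1) b(1) g])
    qed
  qed
qed

lemma card_fibres:
  assumes "finite X" "finite K" "\<phi> ` X \<subseteq> K"
  shows "card X = (\<Sum>L\<in>K. card {x\<in>X. \<phi> x = L})"
proof -
  have "(\<Sum>L\<in>K. (\<Sum>x\<in>{x. x \<in> X \<and> \<phi> x = L}. (1::nat))) = (\<Sum>x\<in>X. 1)"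
    by (rule sum.group[OF assms])
  thus ?thesis by simp
qed

definition leafim :: "nat set \<Rightarrow> (nat \<times> nat \<Rightarrow> nat) \<Rightarrow> nat set" where
  "leafim S f = (\<lambda>i. f (i,0)) ` S"

lemma leaf_smono: "G S d V f \<Longrightarrow> smono S (\<lambda>i. f (i,0))"
  unfolding smono_def using G_c1 by blast

lemma leaf_bij: "G S d V f \<Longrightarrow> bij_betw (\<lambda>i. f (i,0)) S (leafim S f)"
  unfolding bij_betw_def leafim_def using smono_inj[OF leaf_smono] by blast

lemma leafim_sub: "G S d V f \<Longrightarrow> 0 < d \<Longrightarrow> leafim S f \<subseteq> V"
  unfolding leafim_def using G_val by blast

lemma id_smono_bij: "bij_betw id V V \<and> smono V id"
  by (simp add: smono_def)

lemma A2_fibre: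
  assumes d: "0 < d" and fS: "finite S" and fV: "finite V" and L: "L \<subseteq> V" "card L = card S"
  shows "card {f \<in> Gs S d V. leafim S f = L} = card (Ms L d V)"
proof -
  have fL: "finite L" using L fV finite_subset by blast
  obtain \<alpha> where a: "bij_betw \<alpha> L S" "smono L \<alpha>" using exists_smono_bij[OF fL fS L(2)] by blast
  define \<alpha>' where "\<alpha>' = inv_into L \<alpha>"
  have a': "bij_betw \<alpha>' S L" "smono S \<alpha>'" using smono_inv'[OF a] unfolding \<alpha>'_def by auto
  define \<beta>' where "\<beta>' = inv_into V (id::nat\<Rightarrow>nat)"
  have b': "bij_betw \<beta>' V V" "smono V \<beta>'" using smono_inv'[of id V V] id_smono_bij unfolding \<beta>'_def by auto
  have b'v: "\<And>v. v \<in> V \<Longrightarrow> \<beta>' v = v" unfolding \<beta>'_def by (metis id_apply inj_on_id inv_into_f_f)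
  show ?thesis
  proof (rule bij_betw_same_card[of "tr \<alpha> id L d"], rule bij_betw_byWitness[where f'="tr \<alpha>' \<beta>' S d"])
    show "\<forall>f\<in>{f \<in> Gs S d V. leafim S f = L}. tr \<alpha>' \<beta>' S d (tr \<alpha> id L d f) = f"
      using tr_inv2[OF a(1), of id V V] id_smono_bij unfolding Gs_def \<alpha>'_def \<beta>'_def by blast
    show "\<forall>g\<in>Ms L d V. tr \<alpha> id L d (tr \<alpha>' \<beta>' S d g) = g"
      using tr_inv3[OF a(1), of id V V] id_smono_bij unfolding Ms_def \<alpha>'_def \<beta>'_def by blast
    show "tr \<alpha> id L d ` {f \<in> Gs S d V. leafim S f = L} \<subseteq> Ms L d V"
    proof
      fix h assume "h \<in> tr \<alpha> id L d ` {f \<in> Gs S d V. leafim S f = L}"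
      then obtain f where f: "G S d V f" "leafim S f = L" "h = tr \<alpha> id L d f" unfolding Gs_def by blast
      have gh: "G L d V h" using tr_G[OF a id_smono_bij[THEN conjunct1] id_smono_bij[THEN conjunct2] f(1)] f(3) by simp
      have lb: "bij_betw (\<lambda>i. f (i,0)) S L" using leaf_bij[OF f(1)] f(2) by simp
      have hb: "bij_betw (\<lambda>l. f (\<alpha> l, 0)) L L" using bij_betw_trans[OF a(1) lb] by (simp add: comp_def)
      have hs: "smono L (\<lambda>l. f (\<alpha> l, 0))" using a(2) leaf_smono[OF f(1)] a(1)
        unfolding smono_def bij_betw_def by blast
      have "\<forall>l\<in>L. h (l,0) = l"
      proof
        fix l assume l: "l \<in> L"
        have "h (l,0) = f (\<alpha> l, 0)" using f(3) l d by (simp add: tr_def Ix_def)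
        also have "\<dots> = l" using smono_bij_self_id[OF fL hb hs l] .
        finally show "h (l,0) = l" .
      qed
      thus "h \<in> Ms L d V" using gh unfolding Ms_def by blast
    qed
    show "tr \<alpha>' \<beta>' S d ` Ms L d V \<subseteq> {f \<in> Gs S d V. leafim S f = L}"
    proof
      fix h assume "h \<in> tr \<alpha>' \<beta>' S d ` Ms L d V"
      then obtain g where g: "G L d V g" "\<forall>l\<in>L. g (l,0) = l" "h = tr \<alpha>' \<beta>' S d g" unfolding Ms_def by blast
      have gh: "G S d V h" using tr_G[OF a' b' g(1)] g(3) by simp
      have "leafim S h = L"
      proof -
        have "\<And>i. i \<in> S \<Longrightarrow> h (i,0) = \<alpha>' i"
        proof -
          fix i assume i: "i \<in> S"
          have ai: "\<alpha>' i \<in> L" using a' i unfolding bij_betw_def by blast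
          have "h (i,0) = \<beta>' (g (\<alpha>' i, 0))" using g(3) i d by (simp add: tr_def Ix_def)
          also have "\<dots> = \<beta>' (\<alpha>' i)" using g(2) ai by simp
          also have "\<dots> = \<alpha>' i" using b'v ai L(1) by blast
          finally show "h (i,0) = \<alpha>' i" .
        qed
        hence "leafim S h = \<alpha>' ` S" unfolding leafim_def by simp
        thus ?thesis using a'(1) unfolding bij_betw_def by simp
      qed
      thus "h \<in> {f \<in> Gs S d V. leafim S f = L}" using gh unfolding Gs_def by blast
    qed
  qed
qed

lemma A2:
  assumes d: "0 < d" and fS: "finite S" and fV: "finite V"
  shows "card (Gs S d V) = (\<Sum>L\<in>{L. L \<subseteq> V \<and> card L = card S}. card (Ms L d V))"
proof -
  have fK: "finite {L. L \<subseteq> V \<and> card L = card S}" using fV by simp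
  have sub: "leafim S ` Gs S d V \<subseteq> {L. L \<subseteq> V \<and> card L = card S}"
  proof
    fix L assume "L \<in> leafim S ` Gs S d V"
    then obtain f where f: "G S d V f" "L = leafim S f" unfolding Gs_def by blast
    have "L \<subseteq> V" using leafim_sub[OF f(1) d] f(2) by simp
    moreover have "card L = card S" using bij_betw_same_card[OF leaf_bij[OF f(1)]] f(2) by simp
    ultimately show "L \<in> {L. L \<subseteq> V \<and> card L = card S}" by blast
  qed
  have "card (Gs S d V) = (\<Sum>L\<in>{L. L \<subseteq> V \<and> card L = card S}. card {f \<in> Gs S d V. leafim S f = L})"
    by (rule card_fibres[OF finite_Gs[OF fS fV] fK sub])
  also have "\<dots> = (\<Sum>L\<in>{L. L \<subseteq> V \<and> card L = card S}. card (Ms L d V))"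
    by (rule sum.cong[OF refl]) (use A2_fibre[OF d fS fV] in blast)
  finally show ?thesis .
qed

lemma B_sum:
  assumes d: "0 < d" and fV: "finite V"
  shows "(\<Sum>L\<in>{L. L \<subseteq> V \<and> card L = j}. card (Ms L d V)) = card (Gs {1..j} d {0..<card V})"
proof -
  have "card (Gs {1..j} d V) = (\<Sum>L\<in>{L. L \<subseteq> V \<and> card L = j}. card (Ms L d V))"
    using A2[OF d _ fV, of "{1..j}"] by simp
  moreover have "card (Gs {1..j} d V) = card (Gs {1..j} d {0..<card V})"
    by (rule card_Gs_transport[OF id_smono_bij[THEN conjunct1] id_smono_bij[THEN conjunct2] rk_bij[OF fV] rk_smono[OF fV]])
  ultimately show ?thesis by simp
qed

definition Y0 :: "nat \<Rightarrow> nat \<Rightarrow> nat" where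
  "Y0 n = (\<lambda>i\<in>{1..n}. 0)"

definition RC :: "nat \<Rightarrow> nat \<Rightarrow> ((nat \<times> nat) \<times> (nat \<times> nat)) set \<Rightarrow> bool" where
  "RC n d R \<longleftrightarrow>
     (let I = CR_index n d;
          eqv = (\<lambda>x y. (x,y) \<in> R \<and> (y,x) \<in> R);
          lt = (\<lambda>x y. (x,y) \<in> R \<and> (y,x) \<notin> R)
      in R \<subseteq> I \<times> I \<and> refl_on I R \<and> trans R \<and> total_on I R
       \<and> (d \<ge> 1 \<longrightarrow> (\<forall>i\<in>{1..n}. \<forall>i'\<in>{1..n}. i < i' \<longrightarrow> lt (i,0) (i',0)))
       \<and> (\<forall>i\<in>{1..n}. \<forall>j<d. \<forall>j'<d. j > j' \<longrightarrow> lt (i,j) (i,j'))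
       \<and> (\<forall>x\<in>I. \<forall>y\<in>I. eqv x y \<longrightarrow> snd x = snd y)
       \<and> (\<forall>i\<in>{1..n}. \<forall>i'\<in>{1..n}. \<forall>j. 0 < j \<and> j < d \<longrightarrow>
              \<not> eqv (i,j) (i',j) \<longrightarrow> \<not> eqv (i,j-1) (i',j-1)))"

lemma Y_PiE: "(Y \<in> {1..n} \<rightarrow>\<^sub>E {0..<1::nat}) \<longleftrightarrow> Y = Y0 n"
  unfolding Y0_def by (auto simp: PiE_def extensional_def Pi_def fun_eq_iff)

lemma is_CR_iff:
  assumes d: "0 < d"
  shows "is_CR n d 1 Y R \<longleftrightarrow> Y = Y0 n \<and> RC n d R"
proof
  assume h: "is_CR n d 1 Y R"
  hence "Y \<in> {1..n} \<rightarrow>\<^sub>E {0..<1::nat}" unfolding is_CR_def Let_def by (rule conjunct1)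
  hence "Y = Y0 n" using Y_PiE by blast
  moreover have "RC n d R" using h unfolding is_CR_def RC_def Let_def
    by - (elim conjE, intro conjI, assumption+)
  ultimately show "Y = Y0 n \<and> RC n d R" by blast
next
  assume h: "Y = Y0 n \<and> RC n d R"
  hence Y: "Y = Y0 n" and r: "RC n d R" by auto
  have "Y \<in> {1..n} \<rightarrow>\<^sub>E {0..<1::nat}" using Y Y_PiE by blast
  moreover have "\<forall>i\<in>{1..n}. \<forall>i'\<in>{1..n}. \<forall>j<d. (((i,j),(i',j)) \<in> R \<and> ((i',j),(i,j)) \<in> R) \<longrightarrow> Y i = Y i'"
    using Y by (simp add: Y0_def)
  moreover have "d = 0 \<longrightarrow> (\<forall>i\<in>{1..n}. \<forall>i'\<in>{1..n}. i < i' \<longrightarrow> Y i < Y i')" using d by simp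
  ultimately show "is_CR n d 1 Y R" using r unfolding is_CR_def RC_def Let_def
    by - (elim conjE, intro conjI, assumption+)
qed


lemma RC_D:
  assumes "RC n d R"
  shows "R \<subseteq> CR_index n d \<times> CR_index n d" "refl_on (CR_index n d) R" "trans R" "total_on (CR_index n d) R"
    "1 \<le> d \<longrightarrow> (\<forall>i\<in>{1..n}. \<forall>i'\<in>{1..n}. i < i' \<longrightarrow> ((i,0),(i',0)) \<in> R \<and> ((i',0),(i,0)) \<notin> R)"
    "\<forall>i\<in>{1..n}. \<forall>j<d. \<forall>j'<d. j > j' \<longrightarrow> ((i,j),(i,j')) \<in> R \<and> ((i,j'),(i,j)) \<notin> R"
    "\<forall>x\<in>CR_index n d. \<forall>y\<in>CR_index n d. (x,y) \<in> R \<and> (y,x) \<in> R \<longrightarrow> snd x = snd y"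
    "\<forall>i\<in>{1..n}. \<forall>i'\<in>{1..n}. \<forall>j. 0 < j \<and> j < d \<longrightarrow>
       \<not> (((i,j),(i',j)) \<in> R \<and> ((i',j),(i,j)) \<in> R) \<longrightarrow> \<not> (((i,j-1),(i',j-1)) \<in> R \<and> ((i',j-1),(i,j-1)) \<in> R)"
  using assms unfolding RC_def Let_def by - (elim conjE, assumption)+

lemma RCI:
  assumes "R \<subseteq> CR_index n d \<times> CR_index n d" "refl_on (CR_index n d) R" "trans R" "total_on (CR_index n d) R"
    "1 \<le> d \<longrightarrow> (\<forall>i\<in>{1..n}. \<forall>i'\<in>{1..n}. i < i' \<longrightarrow> ((i,0),(i',0)) \<in> R \<and> ((i',0),(i,0)) \<notin> R)"
    "\<forall>i\<in>{1..n}. \<forall>j<d. \<forall>j'<d. j > j' \<longrightarrow> ((i,j),(i,j')) \<in> R \<and> ((i,j'),(i,j)) \<notin> R"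
    "\<forall>x\<in>CR_index n d. \<forall>y\<in>CR_index n d. (x,y) \<in> R \<and> (y,x) \<in> R \<longrightarrow> snd x = snd y"
    "\<forall>i\<in>{1..n}. \<forall>i'\<in>{1..n}. \<forall>j. 0 < j \<and> j < d \<longrightarrow>
       \<not> (((i,j),(i',j)) \<in> R \<and> ((i',j),(i,j)) \<in> R) \<longrightarrow> \<not> (((i,j-1),(i',j-1)) \<in> R \<and> ((i',j-1),(i,j-1)) \<in> R)"
  shows "RC n d R"
  using assms unfolding RC_def Let_def by - (intro conjI, assumption+)

definition Rf :: "(nat \<times> nat) set \<Rightarrow> (nat \<times> nat \<Rightarrow> nat) \<Rightarrow> ((nat \<times> nat) \<times> (nat \<times> nat)) set" where
  "Rf I f = {(x,y). x \<in> I \<and> y \<in> I \<and> f x \<le> f y}"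

lemma Rf_mem: "x \<in> I \<Longrightarrow> y \<in> I \<Longrightarrow> (x,y) \<in> Rf I f \<longleftrightarrow> f x \<le> f y"
  by (simp add: Rf_def)

lemma CR_index_Ix: "CR_index n d = Ix {1..n} d"
  by (simp add: CR_index_def Ix_def)

lemma G_iff_RC:
  assumes d: "0 < d" and pi: "f \<in> Ix {1..n} d \<rightarrow>\<^sub>E V" and on: "f ` Ix {1..n} d = V"
  shows "G {1..n} d V f \<longleftrightarrow> RC n d (Rf (Ix {1..n} d) f)"
proof
  let ?I = "Ix {1..n} d"
  let ?R = "Rf ?I f"
  have I: "\<And>i j. ((i,j) \<in> ?I) = (i \<in> {1..n} \<and> j < d)" by (simp add: Ix_def)
  assume g: "G {1..n} d V f"
  show "RC n d ?R" unfolding CR_index_Ix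
  proof (rule RCI[unfolded CR_index_Ix])
    show "?R \<subseteq> ?I \<times> ?I" by (auto simp: Rf_def)
    show "refl_on ?I ?R" by (auto simp: Rf_def refl_on_def)
    show "trans ?R" by (auto simp: Rf_def trans_def)
    show "total_on ?I ?R" by (auto simp: Rf_def total_on_def)
    show "1 \<le> d \<longrightarrow> (\<forall>i\<in>{1..n}. \<forall>i'\<in>{1..n}. i < i' \<longrightarrow> ((i,0),(i',0)) \<in> ?R \<and> ((i',0),(i,0)) \<notin> ?R)"
    proof (intro impI ballI)
      fix i i' assume i: "i \<in> {1..n}" "i' \<in> {1..n}" "i < i'"
      have m: "(i,0) \<in> ?I" "(i',0) \<in> ?I" using i d by (auto simp: Ix_def)
      have "f (i,0) < f (i',0)" using G_c1[OF g] i by blast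
      thus "((i,0),(i',0)) \<in> ?R \<and> ((i',0),(i,0)) \<notin> ?R"
        using Rf_mem[OF m(1) m(2)] Rf_mem[OF m(2) m(1)] by simp
    qed
    show "\<forall>i\<in>{1..n}. \<forall>j<d. \<forall>j'<d. j > j' \<longrightarrow> ((i,j),(i,j')) \<in> ?R \<and> ((i,j'),(i,j)) \<notin> ?R"
    proof (intro impI ballI allI)
      fix i j j' assume i: "i \<in> {1..n}" "j < d" "j' < d" "j > j'"
      have m: "(i,j) \<in> ?I" "(i,j') \<in> ?I" using i by (auto simp: Ix_def)
      have "f (i,j) < f (i,j')" using G_c3[OF g] i by blast
      thus "((i,j),(i,j')) \<in> ?R \<and> ((i,j'),(i,j)) \<notin> ?R"
        using Rf_mem[OF m(1) m(2)] Rf_mem[OF m(2) m(1)] by simp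
    qed
    show "\<forall>x\<in>?I. \<forall>y\<in>?I. (x,y) \<in> ?R \<and> (y,x) \<in> ?R \<longrightarrow> snd x = snd y"
    proof (intro impI ballI)
      fix x y assume x: "x \<in> ?I" and y: "y \<in> ?I" and e: "(x,y) \<in> ?R \<and> (y,x) \<in> ?R"
      obtain i j where xi: "x = (i,j)" "i \<in> {1..n}" "j < d" using x by (auto simp: Ix_def)
      obtain i' j' where yi: "y = (i',j')" "i' \<in> {1..n}" "j' < d" using y by (auto simp: Ix_def)
      have "f (i,j) = f (i',j')" using e xi yi x y by (simp add: Rf_mem)
      thus "snd x = snd y" using G_c4[OF g xi(2) yi(2) xi(3) yi(3)] xi yi by simp
    qed
    show "\<forall>i\<in>{1..n}. \<forall>i'\<in>{1..n}. \<forall>j. 0 < j \<and> j < d \<longrightarrow>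
       \<not> (((i,j),(i',j)) \<in> ?R \<and> ((i',j),(i,j)) \<in> ?R) \<longrightarrow> \<not> (((i,j-1),(i',j-1)) \<in> ?R \<and> ((i',j-1),(i,j-1)) \<in> ?R)"
    proof (intro impI ballI allI)
      fix i i' j assume i: "i \<in> {1..n}" "i' \<in> {1..n}" and j: "0 < j \<and> j < d"
        and ne: "\<not> (((i,j),(i',j)) \<in> ?R \<and> ((i',j),(i,j)) \<in> ?R)"
      have m: "(i,j) \<in> ?I" "(i',j) \<in> ?I" "(i,j-1) \<in> ?I" "(i',j-1) \<in> ?I" using i j by (auto simp: Ix_def)
      have "f (i,j) \<noteq> f (i',j)" using ne Rf_mem[OF m(1) m(2)] Rf_mem[OF m(2) m(1)] by auto
      hence "f (i,j-1) \<noteq> f (i',j-1)" using G_c5[OF g i] j by blast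
      thus "\<not> (((i,j-1),(i',j-1)) \<in> ?R \<and> ((i',j-1),(i,j-1)) \<in> ?R)"
        using Rf_mem[OF m(3) m(4)] Rf_mem[OF m(4) m(3)] by auto
    qed
  qed
next
  let ?I = "Ix {1..n} d"
  let ?R = "Rf ?I f"
  have I: "\<And>i j. ((i,j) \<in> ?I) = (i \<in> {1..n} \<and> j < d)" by (simp add: Ix_def)
  assume r: "RC n d ?R"
  note rd = RC_D[OF r, unfolded CR_index_Ix]
  show "G {1..n} d V f"
  proof (rule GI[OF pi on])
    fix i i' assume i: "i \<in> {1..n}" "i' \<in> {1..n}" "i < i'"
    hence "((i,0),(i',0)) \<in> ?R \<and> ((i',0),(i,0)) \<notin> ?R" using rd(5) d by auto
    moreover have m: "(i,0) \<in> ?I" "(i',0) \<in> ?I" using i d by (auto simp: Ix_def)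
    ultimately show "f (i,0) < f (i',0)" using Rf_mem[OF m(1) m(2)] Rf_mem[OF m(2) m(1)] by auto
  next
    fix i j j' assume i: "i \<in> {1..n}" and j: "j < d" "j' < j"
    hence "((i,j),(i,j')) \<in> ?R \<and> ((i,j'),(i,j)) \<notin> ?R" using rd(6) by auto
    moreover have m: "(i,j) \<in> ?I" "(i,j') \<in> ?I" using i j by (auto simp: Ix_def)
    ultimately show "f (i,j) < f (i,j')" using Rf_mem[OF m(1) m(2)] Rf_mem[OF m(2) m(1)] by auto
  next
    fix i i' j j' assume i: "i \<in> {1..n}" "i' \<in> {1..n}" and j: "j < d" "j' < d" and e: "f (i,j) = f (i',j')"
    have m: "(i,j) \<in> ?I" "(i',j') \<in> ?I" using i j by (auto simp: Ix_def)
    have "((i,j),(i',j')) \<in> ?R \<and> ((i',j'),(i,j)) \<in> ?R" using e Rf_mem[OF m(1) m(2)] Rf_mem[OF m(2) m(1)] by auto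
    moreover note m
    ultimately show "j = j'" using rd(7) by fastforce
  next
    fix i i' j assume i: "i \<in> {1..n}" "i' \<in> {1..n}" and j: "0 < j" "j < d" and e: "f (i,j-1) = f (i',j-1)"
    have m: "(i,j) \<in> ?I" "(i',j) \<in> ?I" "(i,j-1) \<in> ?I" "(i',j-1) \<in> ?I" using i j by (auto simp: Ix_def)
    have "((i,j-1),(i',j-1)) \<in> ?R \<and> ((i',j-1),(i,j-1)) \<in> ?R" using e Rf_mem[OF m(3) m(4)] Rf_mem[OF m(4) m(3)] by auto
    hence "((i,j),(i',j)) \<in> ?R \<and> ((i',j),(i,j)) \<in> ?R" using rd(8) i j by blast
    thus "f (i,j) = f (i',j)" using Rf_mem[OF m(1) m(2)] Rf_mem[OF m(2) m(1)] by auto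
  qed
qed

lemma quot_card_Rf:
  assumes fI: "finite I"
  shows "card (I // (Rf I f \<inter> (Rf I f)\<inverse>)) = card (f ` I)"
proof -
  let ?E = "Rf I f \<inter> (Rf I f)\<inverse>"
  have Ex: "\<And>x. x \<in> I \<Longrightarrow> ?E `` {x} = {y \<in> I. f y = f x}"
    by (auto simp: Rf_def)
  have q: "I // ?E = (\<lambda>x. ?E `` {x}) ` I" unfolding quotient_def by blast
  have "card ((\<lambda>x. ?E `` {x}) ` I) = card (f ` I)"
  proof (rule card_image_same_kernel[OF fI], intro ballI)
    fix x y assume x: "x \<in> I" and y: "y \<in> I"
    show "(?E `` {x} = ?E `` {y}) = (f x = f y)"
    proof
      assume "?E `` {x} = ?E `` {y}"
      hence "{z \<in> I. f z = f x} = {z \<in> I. f z = f y}" using Ex x y by simp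
      thus "f x = f y" using x by blast
    next
      assume "f x = f y"
      thus "?E `` {x} = ?E `` {y}" using Ex x y by simp
    qed
  qed
  thus ?thesis using q by simp
qed

lemma below_img:
  assumes g: "G S d {0..<p} f" and x: "x \<in> Ix S d"
  shows "f ` {y \<in> Ix S d. f y < f x} = {0..<f x}"
proof
  show "f ` {y \<in> Ix S d. f y < f x} \<subseteq> {0..<f x}" by auto
  show "{0..<f x} \<subseteq> f ` {y \<in> Ix S d. f y < f x}"
  proof
    fix w assume w: "w \<in> {0..<f x}"
    have "f x \<in> {0..<p}" using G_onto[OF g] x by blast
    hence "w \<in> {0..<p}" using w by simp
    then obtain y where "y \<in> Ix S d" "w = f y" using G_onto[OF g] by blast
    thus "w \<in> f ` {y \<in> Ix S d. f y < f x}" using w by auto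
  qed
qed

lemma G_unique:
  assumes f: "G S d {0..<p} f" and g: "G S d {0..<p} g"
    and e: "\<forall>x\<in>Ix S d. \<forall>y\<in>Ix S d. (f x \<le> f y) = (g x \<le> g y)"
  shows "f = g"
proof -
  have main: "\<forall>x\<in>Ix S d. f x = v \<longrightarrow> g x = v" for v
  proof (induction v rule: less_induct)
    case (less v)
    show ?case
    proof (intro ballI impI)
      fix x assume x: "x \<in> Ix S d" and fx: "f x = v"
      let ?Y = "{y\<in>Ix S d. f y < f x}"
      have Yg: "?Y = {y\<in>Ix S d. g y < g x}"
      proof (rule Collect_cong)
        fix y
        show "(y \<in> Ix S d \<and> f y < f x) = (y \<in> Ix S d \<and> g y < g x)"
          using e x by (meson not_le)
      qed
      have "f ` ?Y = g ` ?Y"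
      proof (rule image_cong[OF refl])
        fix y assume y: "y \<in> ?Y"
        hence yI: "y \<in> Ix S d" and lt: "f y < v" using fx by auto
        have "g y = f y" using less.IH[OF lt] yI by blast
        thus "f y = g y" by simp
      qed
      have "{0..<f x} = f ` ?Y" using below_img[OF f x] by simp
      also have "\<dots> = g ` ?Y" by fact
      also have "\<dots> = g ` {y\<in>Ix S d. g y < g x}" using Yg by simp
      also have "\<dots> = {0..<g x}" using below_img[OF g x] by simp
      finally have "card {0..<f x} = card {0..<g x}" by simp
      thus "g x = v" using fx by simp
    qed
  qed
  show ?thesis
  proof
    fix x show "f x = g x"
    proof (cases "x \<in> Ix S d")
      case True
      have "f x = f x \<longrightarrow> g x = f x" using main[of "f x"] True by (rule bspec)
      thus ?thesis by simp
    next
      case False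
      have "f x = undefined" "g x = undefined" using G_ext[OF f False] G_ext[OF g False] by auto
      thus ?thesis by simp
    qed
  qed
qed

lemma downset_key:
  assumes sub: "R \<subseteq> I \<times> I" and rf: "refl_on I R" and tr: "trans R" and tot: "total_on I R"
    and fI: "finite I" and x: "x \<in> I" and y: "y \<in> I"
  shows "(x,y) \<in> R \<longleftrightarrow> card {z\<in>I. (z,x) \<in> R} \<le> card {z\<in>I. (z,y) \<in> R}"
proof
  assume xy: "(x,y) \<in> R"
  have "{z\<in>I. (z,x) \<in> R} \<subseteq> {z\<in>I. (z,y) \<in> R}" using xy tr by (auto dest: transD)
  thus "card {z\<in>I. (z,x) \<in> R} \<le> card {z\<in>I. (z,y) \<in> R}" using fI by (auto intro: card_mono)
next
  assume c: "card {z\<in>I. (z,x) \<in> R} \<le> card {z\<in>I. (z,y) \<in> R}"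
  show "(x,y) \<in> R"
  proof (rule ccontr)
    assume nxy: "(x,y) \<notin> R"
    have "x \<noteq> y" using nxy rf y unfolding refl_on_def by blast
    hence yx: "(y,x) \<in> R" using tot x y nxy unfolding total_on_def by blast
    have "{z\<in>I. (z,y) \<in> R} \<subseteq> {z\<in>I. (z,x) \<in> R}" using yx tr by (auto dest: transD)
    moreover have "x \<in> {z\<in>I. (z,x) \<in> R}" "x \<notin> {z\<in>I. (z,y) \<in> R}" using x rf nxy unfolding refl_on_def by auto
    ultimately have "{z\<in>I. (z,y) \<in> R} \<subset> {z\<in>I. (z,x) \<in> R}" by blast
    hence "card {z\<in>I. (z,y) \<in> R} < card {z\<in>I. (z,x) \<in> R}" using fI by (auto intro: psubset_card_mono)
    thus False using c by simp
  qed
qed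

lemma finite_Ix: "finite S \<Longrightarrow> finite (Ix S d)" by (simp add: Ix_def)

lemma E3:
  assumes d: "0 < d" and r: "RC n d R" and sz: "CR_size n d R = p"
  shows "\<exists>f. G {1..n} d {0..<p} f \<and> R = Rf (Ix {1..n} d) f"
proof -
  let ?I = "Ix {1..n} d"
  note rd = RC_D[OF r, unfolded CR_index_Ix]
  have fI: "finite ?I" by (simp add: finite_Ix)
  define c where "c x = card {z\<in>?I. (z,x) \<in> R}" for x
  define f where "f = (\<lambda>x\<in>?I. rk (c ` ?I) (c x))"
  have fc: "finite (c ` ?I)" using fI by simp
  have key: "\<And>x y. x \<in> ?I \<Longrightarrow> y \<in> ?I \<Longrightarrow> (x,y) \<in> R \<longleftrightarrow> f x \<le> f y"
  proof -
    fix x y assume x: "x \<in> ?I" and y: "y \<in> ?I"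
    have "(x,y) \<in> R \<longleftrightarrow> c x \<le> c y" unfolding c_def by (rule downset_key[OF rd(1-4) fI x y])
    also have "\<dots> \<longleftrightarrow> rk (c ` ?I) (c x) \<le> rk (c ` ?I) (c y)"
      using smono_le_iff[OF rk_smono[OF fc]] x y by simp
    finally show "(x,y) \<in> R \<longleftrightarrow> f x \<le> f y" using x y by (simp add: f_def)
  qed
  have RR: "R = Rf ?I f"
  proof
    show "R \<subseteq> Rf ?I f" using key rd(1) by (auto simp: Rf_def)
    show "Rf ?I f \<subseteq> R" using key by (auto simp: Rf_def)
  qed
  have fim: "f ` ?I = {0..<card (c ` ?I)}"
  proof -
    have "f ` ?I = rk (c ` ?I) ` (c ` ?I)" by (auto simp: f_def image_image)
    thus ?thesis using rk_bij[OF fc] unfolding bij_betw_def by simp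
  qed
  have "p = card (?I // (R \<inter> R\<inverse>))" using sz by (simp add: CR_size_def CR_index_Ix)
  also have "\<dots> = card (f ` ?I)" using RR quot_card_Rf[OF fI] by simp
  also have "\<dots> = card (c ` ?I)" using fim by simp
  finally have pc: "p = card (c ` ?I)" .
  have fim': "f ` ?I = {0..<p}" using fim pc by simp
  have pi: "f \<in> ?I \<rightarrow>\<^sub>E {0..<p}" using fim' by (auto simp: f_def)
  have "G {1..n} d {0..<p} f" using G_iff_RC[OF d pi fim'] r RR by simp
  thus ?thesis using RR by blast
qed

lemma A1:
  assumes d: "0 < d"
  shows "P p n d 1 = card (Gs {1..n} d {0..<p})"
proof -
  let ?I = "Ix {1..n} d"
  have fI: "finite ?I" by (simp add: finite_Ix)
  have eq: "{(Y, R). is_CR n d 1 Y R \<and> CR_size n d R = p} = (\<lambda>f. (Y0 n, Rf ?I f)) ` Gs {1..n} d {0..<p}"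
  proof
    show "{(Y, R). is_CR n d 1 Y R \<and> CR_size n d R = p} \<subseteq> (\<lambda>f. (Y0 n, Rf ?I f)) ` Gs {1..n} d {0..<p}"
    proof
      fix z assume "z \<in> {(Y, R). is_CR n d 1 Y R \<and> CR_size n d R = p}"
      then obtain Y R where z: "z = (Y,R)" "is_CR n d 1 Y R" "CR_size n d R = p" by blast
      have Y: "Y = Y0 n" and r: "RC n d R" using is_CR_iff[OF d] z(2) by auto
      obtain f where f: "G {1..n} d {0..<p} f" "R = Rf ?I f" using E3[OF d r z(3)] by blast
      thus "z \<in> (\<lambda>f. (Y0 n, Rf ?I f)) ` Gs {1..n} d {0..<p}" using z Y by (auto simp: Gs_def)
    qed
    show "(\<lambda>f. (Y0 n, Rf ?I f)) ` Gs {1..n} d {0..<p} \<subseteq> {(Y, R). is_CR n d 1 Y R \<and> CR_size n d R = p}"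
    proof
      fix z assume "z \<in> (\<lambda>f. (Y0 n, Rf ?I f)) ` Gs {1..n} d {0..<p}"
      then obtain f where f: "G {1..n} d {0..<p} f" "z = (Y0 n, Rf ?I f)" by (auto simp: Gs_def)
      have r: "RC n d (Rf ?I f)" using G_iff_RC[OF d G_PiE[OF f(1)] G_onto[OF f(1)]] f(1) by simp
      have "CR_size n d (Rf ?I f) = card (f ` ?I)" using quot_card_Rf[OF fI] by (simp add: CR_size_def CR_index_Ix)
      also have "\<dots> = p" using G_onto[OF f(1)] by simp
      finally show "z \<in> {(Y, R). is_CR n d 1 Y R \<and> CR_size n d R = p}"
        using f(2) r is_CR_iff[OF d] by simp
    qed
  qed
  have inj: "inj_on (\<lambda>f. (Y0 n, Rf ?I f)) (Gs {1..n} d {0..<p})"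
  proof (rule inj_onI)
    fix f g assume f: "f \<in> Gs {1..n} d {0..<p}" and g: "g \<in> Gs {1..n} d {0..<p}"
      and e: "(Y0 n, Rf ?I f) = (Y0 n, Rf ?I g)"
    have "\<forall>x\<in>?I. \<forall>y\<in>?I. (f x \<le> f y) = (g x \<le> g y)"
      using e by (auto simp: Rf_mem[symmetric])
    thus "f = g" using G_unique f g by (auto simp: Gs_def)
  qed
  show ?thesis unfolding P_def eq using card_image[OF inj] by simp
qed

definition Af :: "nat set \<Rightarrow> nat \<Rightarrow> nat \<Rightarrow> (nat \<times> nat \<Rightarrow> nat) \<Rightarrow> nat set" where
  "Af L d v0 f = {l\<in>L. f (l,d-1) = v0}"

definition V1f :: "nat set \<Rightarrow> nat \<Rightarrow> nat \<Rightarrow> (nat \<times> nat \<Rightarrow> nat) \<Rightarrow> nat set" where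
  "V1f L d v0 f = f ` (Af L d v0 f \<times> {0..<d-1})"

definition comb :: "nat set \<Rightarrow> nat set \<Rightarrow> nat \<Rightarrow> nat \<Rightarrow> (nat \<times> nat \<Rightarrow> nat) \<Rightarrow> (nat \<times> nat \<Rightarrow> nat) \<Rightarrow> (nat \<times> nat \<Rightarrow> nat)" where
  "comb A B d v0 g1 g2 = (\<lambda>x. if fst x \<in> A \<and> snd x < d-1 then g1 x
       else if fst x \<in> A \<and> snd x = d-1 then v0
       else if fst x \<in> B \<and> snd x < d then g2 x else undefined)"

lemma propag:
  assumes g: "G L d V f" and i: "i \<in> L" "i' \<in> L" and e: "f (i,j) = f (i',j)"
  shows "j \<le> k \<Longrightarrow> k < d \<Longrightarrow> f (i,k) = f (i',k)"
proof (induction k)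
  case 0 thus ?case using e by simp
next
  case (Suc k)
  show ?case
  proof (cases "j = Suc k")
    case True thus ?thesis using e by simp
  next
    case False
    hence "f (i,k) = f (i',k)" using Suc by simp
    thus ?thesis using G_c5[OF g i, of "Suc k"] Suc.prems by simp
  qed
qed

context
  fixes L V :: "nat set" and d v0 :: nat
  assumes d: "2 \<le> d" and fV: "finite V" and v0: "v0 \<in> V" and vmin: "\<forall>v\<in>V. v0 \<le> v"
begin

lemma fwd_basic:
  assumes f: "f \<in> Ms L d V"
  shows "G L d V f" "\<And>l. l \<in> L \<Longrightarrow> f (l,0) = l"
    "\<And>i j. i \<in> L \<Longrightarrow> j < d-1 \<Longrightarrow> v0 < f (i,j)"
    "\<And>i j. i \<in> L \<Longrightarrow> j < d \<Longrightarrow> f (i,j) = v0 \<Longrightarrow> i \<in> Af L d v0 f"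
proof -
  show g: "G L d V f" using f by (simp add: Ms_def)
  show "\<And>l. l \<in> L \<Longrightarrow> f (l,0) = l" using f by (simp add: Ms_def)
  show lt: "\<And>i j. i \<in> L \<Longrightarrow> j < d-1 \<Longrightarrow> v0 < f (i,j)"
  proof -
    fix i j assume i: "i \<in> L" and j: "j < d-1"
    have "f (i,d-1) < f (i,j)" using G_c3[OF g i, of "d-1" j] j d by simp
    moreover have "f (i,d-1) \<in> V" using G_val[OF g i] d by simp
    ultimately show "v0 < f (i,j)" using vmin by force
  qed
  show "\<And>i j. i \<in> L \<Longrightarrow> j < d \<Longrightarrow> f (i,j) = v0 \<Longrightarrow> i \<in> Af L d v0 f"
  proof -
    fix i j assume i: "i \<in> L" and j: "j < d" and e: "f (i,j) = v0"
    have "\<not> j < d-1" using lt[OF i] e by force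
    hence "j = d-1" using j by simp
    thus "i \<in> Af L d v0 f" using i e by (simp add: Af_def)
  qed
qed

lemma fwd_A:
  assumes f: "f \<in> Ms L d V"
  shows "Af L d v0 f = L \<inter> V1f L d v0 f"
proof
  note fb = fwd_basic[OF f]
  show "Af L d v0 f \<subseteq> L \<inter> V1f L d v0 f"
  proof
    fix l assume l: "l \<in> Af L d v0 f"
    hence lL: "l \<in> L" by (simp add: Af_def)
    have "(l,0) \<in> Af L d v0 f \<times> {0..<d-1}" using l d by simp
    hence "f (l,0) \<in> V1f L d v0 f" unfolding V1f_def by blast
    thus "l \<in> L \<inter> V1f L d v0 f" using fb(2)[OF lL] lL by simp
  qed
  show "L \<inter> V1f L d v0 f \<subseteq> Af L d v0 f"
  proof
    fix l assume l: "l \<in> L \<inter> V1f L d v0 f"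
    then obtain a j where a: "a \<in> Af L d v0 f" "j < d-1" "l = f (a,j)" unfolding V1f_def by auto
    have aL: "a \<in> L" using a(1) by (simp add: Af_def)
    have lL: "l \<in> L" using l by simp
    have "f (l,0) = f (a,j)" using fb(2)[OF lL] a(3) by simp
    hence "0 = j" using G_c4[OF fb(1) lL aL, of 0 j] a(2) d by simp
    hence "l = a" using a(3) fb(2)[OF aL] by simp
    thus "l \<in> Af L d v0 f" using a(1) by simp
  qed
qed

lemma fwd_V1:
  assumes f: "f \<in> Ms L d V"
  shows "V1f L d v0 f \<subseteq> V - {v0}" "L \<inter> V1f L d v0 f \<noteq> {}"
proof -
  note fb = fwd_basic[OF f]
  show "V1f L d v0 f \<subseteq> V - {v0}"
  proof
    fix v assume "v \<in> V1f L d v0 f"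
    then obtain a j where a: "a \<in> Af L d v0 f" "j < d-1" "v = f (a,j)" unfolding V1f_def by auto
    have aL: "a \<in> L" using a(1) by (simp add: Af_def)
    have "v \<in> V" using G_val[OF fb(1) aL, of j] a d by simp
    moreover have "v \<noteq> v0" using fb(3)[OF aL a(2)] a(3) by simp
    ultimately show "v \<in> V - {v0}" by simp
  qed
  have "v0 \<in> f ` Ix L d" using G_onto[OF fb(1)] v0 by simp
  then obtain i j where ij: "i \<in> L" "j < d" "f (i,j) = v0" by (auto simp: Ix_def)
  have "i \<in> Af L d v0 f" by (rule fb(4)[OF ij])
  thus "L \<inter> V1f L d v0 f \<noteq> {}" using fwd_A[OF f] by blast
qed

lemma fwd_g1:
  assumes f: "f \<in> Ms L d V"
  defines "V1 \<equiv> V1f L d v0 f"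
  shows "restrict f (Ix (L \<inter> V1) (d-1)) \<in> Ms (L \<inter> V1) (d-1) V1"
proof -
  note fb = fwd_basic[OF f]
  let ?A = "L \<inter> V1"
  let ?g = "restrict f (Ix ?A (d-1))"
  have A: "Af L d v0 f = ?A" using fwd_A[OF f] unfolding V1_def .
  have AL: "?A \<subseteq> L" by blast
  have gi: "\<And>i j. i \<in> ?A \<Longrightarrow> j < d-1 \<Longrightarrow> ?g (i,j) = f (i,j)" by (simp add: Ix_def)
  have e1: "V1 = f ` (Af L d v0 f \<times> {0..<d-1})" unfolding V1_def V1f_def ..
  have e2: "Ix ?A (d-1) = Af L d v0 f \<times> {0..<d-1}" unfolding Ix_def A ..
  have im: "f ` Ix ?A (d-1) = V1" unfolding e2 by (rule e1[symmetric])
  have pi: "?g \<in> Ix ?A (d-1) \<rightarrow>\<^sub>E V1" unfolding restrict_PiE_iff using im by blast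
  have on: "?g ` Ix ?A (d-1) = V1" using im by simp
  have gG: "G ?A (d-1) V1 ?g"
  proof (rule GI[OF pi on])
    fix i i' assume i: "i \<in> ?A" "i' \<in> ?A" "i < i'"
    have iL: "i \<in> L" "i' \<in> L" using i by auto
    have z: "0 < d-1" using d by simp
    have "f (i,0) < f (i',0)" by (rule G_c1[OF fb(1) iL i(3)])
    thus "?g (i,0) < ?g (i',0)" using gi[OF i(1) z] gi[OF i(2) z] by simp
  next
    fix i j j' assume i: "i \<in> ?A" and j: "j < d-1" "j' < j"
    have iL: "i \<in> L" using i by auto
    have jd: "j < d" using j by simp
    have j': "j' < d-1" using j by simp
    have "f (i,j) < f (i,j')" by (rule G_c3[OF fb(1) iL jd j(2)])
    thus "?g (i,j) < ?g (i,j')" using gi[OF i j(1)] gi[OF i j'] by simp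
  next
    fix i i' j j' assume i: "i \<in> ?A" "i' \<in> ?A" and j: "j < d-1" "j' < d-1" and e: "?g (i,j) = ?g (i',j')"
    have iL: "i \<in> L" "i' \<in> L" using i by auto
    have jd: "j < d" "j' < d" using j by simp_all
    have "f (i,j) = f (i',j')" using e gi[OF i(1) j(1)] gi[OF i(2) j(2)] by simp
    thus "j = j'" by (rule G_c4[OF fb(1) iL jd])
  next
    fix i i' j assume i: "i \<in> ?A" "i' \<in> ?A" and j: "0 < j" "j < d-1" and e: "?g (i,j-1) = ?g (i',j-1)"
    have iL: "i \<in> L" "i' \<in> L" using i by auto
    have jd: "j < d" using j by simp
    have j1: "j - 1 < d-1" using j by simp
    have "f (i,j-1) = f (i',j-1)" using e gi[OF i(1) j1] gi[OF i(2) j1] by simp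
    hence "f (i,j) = f (i',j)" by (rule G_c5[OF fb(1) iL j(1) jd])
    thus "?g (i,j) = ?g (i',j)" using gi[OF i(1) j(2)] gi[OF i(2) j(2)] by simp
  qed
  moreover have "\<forall>l\<in>?A. ?g (l,0) = l"
  proof
    fix l assume l: "l \<in> ?A"
    have z: "0 < d-1" using d by simp
    have "l \<in> L" using l by auto
    thus "?g (l,0) = l" using gi[OF l z] fb(2) by simp
  qed
  ultimately show ?thesis by (simp add: Ms_def)
qed

lemma fwd_g2:
  assumes f: "f \<in> Ms L d V"
  defines "V1 \<equiv> V1f L d v0 f"
  shows "restrict f (Ix (L - V1) d) \<in> Ms (L - V1) d (V - {v0} - V1)"
proof -
  note fb = fwd_basic[OF f]
  let ?B = "L - V1"
  let ?V2 = "V - {v0} - V1"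
  let ?g = "restrict f (Ix ?B d)"
  have A: "Af L d v0 f = L \<inter> V1" using fwd_A[OF f] unfolding V1_def .
  have gi: "\<And>i j. i \<in> ?B \<Longrightarrow> j < d \<Longrightarrow> ?g (i,j) = f (i,j)" by (simp add: Ix_def)
  have val: "\<And>i j. i \<in> ?B \<Longrightarrow> j < d \<Longrightarrow> f (i,j) \<in> ?V2"
  proof -
    fix i j assume i: "i \<in> ?B" and j: "j < d"
    have iL: "i \<in> L" and iA: "i \<notin> Af L d v0 f" using i A by auto
    have "f (i,j) \<in> V" using G_val[OF fb(1) iL j] .
    moreover have "f (i,j) \<noteq> v0" using fb(4)[OF iL j] iA by blast
    moreover have "f (i,j) \<notin> V1"
    proof
      assume "f (i,j) \<in> V1"
      then obtain a j' where a: "a \<in> Af L d v0 f" "j' < d-1" "f (i,j) = f (a,j')" unfolding V1_def V1f_def by auto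
      have aL: "a \<in> L" using a(1) by (simp add: Af_def)
      have "j = j'" using G_c4[OF fb(1) iL aL j, of j'] a d by simp
      hence "f (i,d-1) = f (a,d-1)" using propag[OF fb(1) iL aL, of j "d-1"] a(2,3) d by simp
      hence "f (i,d-1) = v0" using a(1) by (simp add: Af_def)
      hence "i \<in> Af L d v0 f" using iL by (simp add: Af_def)
      thus False using iA by simp
    qed
    ultimately show "f (i,j) \<in> ?V2" by simp
  qed
  have pi: "?g \<in> Ix ?B d \<rightarrow>\<^sub>E ?V2" unfolding restrict_PiE_iff using val by (auto simp: Ix_def)
  have on: "?g ` Ix ?B d = ?V2"
  proof
    show "?g ` Ix ?B d \<subseteq> ?V2" using pi by auto
    show "?V2 \<subseteq> ?g ` Ix ?B d"
    proof
      fix v assume v: "v \<in> ?V2"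
      hence "v \<in> f ` Ix L d" using G_onto[OF fb(1)] by simp
      then obtain i j where ij: "i \<in> L" "j < d" "v = f (i,j)" by (auto simp: Ix_def)
      have "i \<notin> Af L d v0 f"
      proof
        assume iA: "i \<in> Af L d v0 f"
        show False
        proof (cases "j < d-1")
          case True
          hence "v \<in> V1" unfolding V1_def V1f_def using iA ij(3) by auto
          thus False using v by simp
        next
          case False
          hence "j = d-1" using ij by simp
          hence "v = v0" using iA ij(3) by (simp add: Af_def)
          thus False using v by simp
        qed
      qed
      hence "i \<in> ?B" using ij(1) A by auto
      thus "v \<in> ?g ` Ix ?B d" using ij gi by (force simp: Ix_def)
    qed
  qed
  have gG: "G ?B d ?V2 ?g"
  proof (rule GI[OF pi on])
    fix i i' assume i: "i \<in> ?B" "i' \<in> ?B" "i < i'"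
    have iL: "i \<in> L" "i' \<in> L" using i by auto
    have z: "0 < d" using d by simp
    have "f (i,0) < f (i',0)" by (rule G_c1[OF fb(1) iL i(3)])
    thus "?g (i,0) < ?g (i',0)" using gi[OF i(1) z] gi[OF i(2) z] by simp
  next
    fix i j j' assume i: "i \<in> ?B" and j: "j < d" "j' < j"
    have iL: "i \<in> L" using i by auto
    have jd: "j < d" using j by simp
    have j': "j' < d" using j by simp
    have "f (i,j) < f (i,j')" by (rule G_c3[OF fb(1) iL jd j(2)])
    thus "?g (i,j) < ?g (i,j')" using gi[OF i j(1)] gi[OF i j'] by simp
  next
    fix i i' j j' assume i: "i \<in> ?B" "i' \<in> ?B" and j: "j < d" "j' < d" and e: "?g (i,j) = ?g (i',j')"
    have iL: "i \<in> L" "i' \<in> L" using i by auto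
    have jd: "j < d" "j' < d" using j by simp_all
    have "f (i,j) = f (i',j')" using e gi[OF i(1) j(1)] gi[OF i(2) j(2)] by simp
    thus "j = j'" by (rule G_c4[OF fb(1) iL jd])
  next
    fix i i' j assume i: "i \<in> ?B" "i' \<in> ?B" and j: "0 < j" "j < d" and e: "?g (i,j-1) = ?g (i',j-1)"
    have iL: "i \<in> L" "i' \<in> L" using i by auto
    have jd: "j < d" using j by simp
    have j1: "j - 1 < d" using j by simp
    have "f (i,j-1) = f (i',j-1)" using e gi[OF i(1) j1] gi[OF i(2) j1] by simp
    hence "f (i,j) = f (i',j)" by (rule G_c5[OF fb(1) iL j(1) jd])
    thus "?g (i,j) = ?g (i',j)" using gi[OF i(1) j(2)] gi[OF i(2) j(2)] by simp
  qed
  moreover have "\<forall>l\<in>?B. ?g (l,0) = l"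
  proof
    fix l assume l: "l \<in> ?B"
    have z: "0 < d" using d by simp
    have "l \<in> L" using l by auto
    thus "?g (l,0) = l" using gi[OF l z] fb(2) by simp
  qed
  ultimately show ?thesis by (simp add: Ms_def)
qed

lemma fwd_comb:
  assumes f: "f \<in> Ms L d V"
  defines "V1 \<equiv> V1f L d v0 f"
  shows "comb (L \<inter> V1) (L - V1) d v0 (restrict f (Ix (L \<inter> V1) (d-1))) (restrict f (Ix (L - V1) d)) = f"
proof
  fix x :: "nat \<times> nat"
  note fb = fwd_basic[OF f]
  have A: "Af L d v0 f = L \<inter> V1" using fwd_A[OF f] unfolding V1_def .
  obtain i j where x: "x = (i,j)" by fastforce
  show "comb (L \<inter> V1) (L - V1) d v0 (restrict f (Ix (L \<inter> V1) (d-1))) (restrict f (Ix (L - V1) d)) x = f x"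
  proof (cases "i \<in> L \<and> j < d")
    case True
    show ?thesis
    proof (cases "i \<in> V1")
      case iV: True
      hence "f (i,d-1) = v0" using A True by (auto simp: Af_def)
      thus ?thesis using True iV x by (auto simp: comb_def Ix_def)
    next
      case False
      thus ?thesis using True x by (auto simp: comb_def Ix_def)
    qed
  next
    case False
    hence "x \<notin> Ix L d" using x by (simp add: Ix_def)
    hence "f x = undefined" using G_ext[OF fb(1)] by simp
    moreover have "\<not> (i \<in> L \<inter> V1 \<and> j < d-1)" "\<not> (i \<in> L \<inter> V1 \<and> j = d-1)" "\<not> (i \<in> L - V1 \<and> j < d)"
      using False d by auto
    ultimately show ?thesis using x by (auto simp: comb_def)
  qed
qed

lemma bwd:
  assumes V1: "V1 \<subseteq> V - {v0}" and ne: "L \<inter> V1 \<noteq> {}"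
    and g1: "g1 \<in> Ms (L \<inter> V1) (d-1) V1" and g2: "g2 \<in> Ms (L - V1) d (V - {v0} - V1)"
  defines "f \<equiv> comb (L \<inter> V1) (L - V1) d v0 g1 g2"
  shows "f \<in> Ms L d V" "V1f L d v0 f = V1" "restrict f (Ix (L \<inter> V1) (d-1)) = g1"
    "restrict f (Ix (L - V1) d) = g2"
proof -
  let ?A = "L \<inter> V1" and ?B = "L - V1" and ?V2 = "V - {v0} - V1"
  have G1: "G ?A (d-1) V1 g1" and l1: "\<And>l. l \<in> ?A \<Longrightarrow> g1 (l,0) = l" using g1 by (auto simp: Ms_def)
  have G2: "G ?B d ?V2 g2" and l2: "\<And>l. l \<in> ?B \<Longrightarrow> g2 (l,0) = l" using g2 by (auto simp: Ms_def)
  have fA: "\<And>i j. i \<in> ?A \<Longrightarrow> j < d-1 \<Longrightarrow> f (i,j) = g1 (i,j)" by (simp add: f_def comb_def)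
  have fAv: "\<And>i. i \<in> ?A \<Longrightarrow> f (i,d-1) = v0" by (simp add: f_def comb_def)
  have fB: "\<And>i j. i \<in> ?B \<Longrightarrow> j < d \<Longrightarrow> f (i,j) = g2 (i,j)" by (simp add: f_def comb_def)
  have fout: "\<And>x. x \<notin> Ix L d \<Longrightarrow> f x = undefined"
  proof -
    fix x :: "nat \<times> nat" assume x: "x \<notin> Ix L d"
    obtain i j where ij: "x = (i,j)" by fastforce
    have "\<not> (i \<in> ?A \<and> j < d-1)" "\<not> (i \<in> ?A \<and> j = d-1)" "\<not> (i \<in> ?B \<and> j < d)" using x ij d by (auto simp: Ix_def)
    thus "f x = undefined" using ij unfolding f_def comb_def by auto
  qed
  have vA: "\<And>i j. i \<in> ?A \<Longrightarrow> j < d-1 \<Longrightarrow> f (i,j) \<in> V1" using fA G_val[OF G1] by simp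
  have vB: "\<And>i j. i \<in> ?B \<Longrightarrow> j < d \<Longrightarrow> f (i,j) \<in> ?V2" using fB G_val[OF G2] by simp
  have v0V1: "v0 \<notin> V1" using V1 by blast
  have Lc: "\<And>i. i \<in> L \<Longrightarrow> i \<in> ?A \<or> i \<in> ?B" by blast
  have leaf: "\<And>l. l \<in> L \<Longrightarrow> f (l,0) = l"
  proof -
    fix l assume l: "l \<in> L"
    show "f (l,0) = l"
    proof (cases "l \<in> ?A")
      case True thus ?thesis using fA[OF True, of 0] l1[OF True] d by simp
    next
      case False hence "l \<in> ?B" using l by blast
      thus ?thesis using fB[OF _, of l 0] l2 d by simp
    qed
  qed
  have pi: "f \<in> Ix L d \<rightarrow>\<^sub>E V"
  proof (rule PiE_I)
    fix x assume "x \<in> Ix L d"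
    then obtain i j where x: "x = (i,j)" "i \<in> L" "j < d" by (auto simp: Ix_def)
    show "f x \<in> V"
    proof (cases "i \<in> ?A")
      case True
      show ?thesis
      proof (cases "j < d-1")
        case True2: True thus ?thesis using vA[OF True True2] V1 x by auto
      next
        case False hence "j = d-1" using x by simp
        thus ?thesis using fAv[OF True] v0 x by simp
      qed
    next
      case False hence "i \<in> ?B" using x by blast
      thus ?thesis using vB[OF _ x(3)] x by auto
    qed
  next
    fix x assume "x \<notin> Ix L d" thus "f x = undefined" by (rule fout)
  qed
  have on: "f ` Ix L d = V"
  proof
    show "f ` Ix L d \<subseteq> V" using pi by auto
    show "V \<subseteq> f ` Ix L d"
    proof
      fix v assume v: "v \<in> V"
      show "v \<in> f ` Ix L d"
      proof (cases "v = v0")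
        case True
        obtain a where a: "a \<in> ?A" using ne by blast
        have "(a, d-1) \<in> Ix L d" using a d by (simp add: Ix_def)
        thus ?thesis using fAv[OF a] True by force
      next
        case vne: False
        show ?thesis
        proof (cases "v \<in> V1")
          case True
          have "v \<in> g1 ` Ix ?A (d-1)" using G_onto[OF G1] True by simp
          then obtain x where x: "x \<in> Ix ?A (d-1)" "v = g1 x" by (rule imageE)
          then obtain i j where ij0: "x = (i,j)" "i \<in> ?A" "j < d-1" by (auto simp: Ix_def)
          hence ij: "i \<in> ?A" "j < d-1" "v = g1 (i,j)" using x by auto
          have "(i,j) \<in> Ix L d" using ij by (simp add: Ix_def)
          thus ?thesis using fA[OF ij(1,2)] ij(3) by force
        next
          case False
          hence v2: "v \<in> ?V2" using v vne by simp
          have "v \<in> g2 ` Ix ?B d" using G_onto[OF G2] v2 by simp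
          then obtain x where x: "x \<in> Ix ?B d" "v = g2 x" by (rule imageE)
          then obtain i j where ij0: "x = (i,j)" "i \<in> ?B" "j < d" by (auto simp: Ix_def)
          hence ij: "i \<in> ?B" "j < d" "v = g2 (i,j)" using x by auto
          have "(i,j) \<in> Ix L d" using ij by (simp add: Ix_def)
          thus ?thesis using fB[OF ij(1,2)] ij(3) by force
        qed
      qed
    qed
  qed
  have fG: "G L d V f"
  proof (rule GI[OF pi on])
    fix i i' assume "i \<in> L" "i' \<in> L" "i < i'"
    thus "f (i,0) < f (i',0)" using leaf by simp
  next
    fix i j j' assume i: "i \<in> L" and j: "j < d" "j' < j"
    show "f (i,j) < f (i,j')"
    proof (cases "i \<in> ?A")
      case True
      have j': "j' < d-1" using j by simp
      show ?thesis
      proof (cases "j < d-1")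
        case True2: True
        have "g1 (i,j) < g1 (i,j')" by (rule G_c3[OF G1 True True2 j(2)])
        thus ?thesis using fA[OF True True2] fA[OF True j'] by simp
      next
        case False hence jd: "j = d-1" using j by simp
        have "f (i,j') \<in> V1" by (rule vA[OF True j'])
        hence "f (i,j') \<in> V" "f (i,j') \<noteq> v0" using V1 by auto
        hence "v0 < f (i,j')" using vmin by force
        thus ?thesis using fAv[OF True] jd by simp
      qed
    next
      case False hence iB: "i \<in> ?B" using i by blast
      have j': "j' < d" using j by simp
      have "g2 (i,j) < g2 (i,j')" by (rule G_c3[OF G2 iB j])
      thus ?thesis using fB[OF iB j(1)] fB[OF iB j'] by simp
    qed
  next
    fix i i' j j' assume i: "i \<in> L" "i' \<in> L" and j: "j < d" "j' < d" and e: "f (i,j) = f (i',j')"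
    have cl: "\<And>a b. a \<in> L \<Longrightarrow> b < d \<Longrightarrow> (a \<in> ?A \<and> b < d-1 \<and> f (a,b) \<in> V1) \<or> (a \<in> ?A \<and> b = d-1 \<and> f (a,b) = v0) \<or> (a \<in> ?B \<and> f (a,b) \<in> ?V2)"
    proof -
      fix a b assume a: "a \<in> L" and b: "b < d"
      show "(a \<in> ?A \<and> b < d-1 \<and> f (a,b) \<in> V1) \<or> (a \<in> ?A \<and> b = d-1 \<and> f (a,b) = v0) \<or> (a \<in> ?B \<and> f (a,b) \<in> ?V2)"
      proof (cases "a \<in> ?A")
        case True
        show ?thesis
        proof (cases "b < d-1")
          case True2: True thus ?thesis using vA[OF True True2] True by blast
        next
          case False hence "b = d-1" using b by simp
          thus ?thesis using fAv[OF True] True by simp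
        qed
      next
        case False hence "a \<in> ?B" using a by blast
        thus ?thesis using vB b by blast
      qed
    qed
    show "j = j'"
      using cl[OF i(1) j(1)] cl[OF i(2) j(2)]
    proof (elim disjE conjE)
      assume "i \<in> ?A" "i' \<in> ?A" "j < d-1" "j' < d-1"
      thus "j = j'" using G_c4[OF G1, of i i' j j'] e fA by simp
    next
      assume "i \<in> ?B" "i' \<in> ?B"
      thus "j = j'" using G_c4[OF G2, of i i' j j'] e fB j by simp
    qed (use e v0V1 in auto)
  next
    fix i i' j assume i: "i \<in> L" "i' \<in> L" and j: "0 < j" "j < d" and e: "f (i,j-1) = f (i',j-1)"
    have j1: "j - 1 < d - 1" using j by simp
    have j1': "j - 1 < d" using j by simp
    show "f (i,j) = f (i',j)"
    proof (cases "i \<in> ?A")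
      case True
      have i': "i' \<in> ?A"
      proof (rule ccontr)
        assume "i' \<notin> ?A" hence "i' \<in> ?B" using i by blast
        hence "f (i',j-1) \<in> ?V2" using vB j1' by blast
        moreover have "f (i,j-1) \<in> V1" using vA[OF True j1] .
        ultimately show False using e by simp
      qed
      show ?thesis
      proof (cases "j < d-1")
        case True2: True
        have "g1 (i,j-1) = g1 (i',j-1)" using e fA[OF True j1] fA[OF i' j1] by simp
        hence "g1 (i,j) = g1 (i',j)" by (rule G_c5[OF G1 True i' j(1) True2])
        thus ?thesis using fA[OF True True2] fA[OF i' True2] by simp
      next
        case False hence "j = d-1" using j by simp
        thus ?thesis using fAv[OF True] fAv[OF i'] by simp
      qed
    next
      case False hence iB: "i \<in> ?B" using i by blast
      have i': "i' \<in> ?B"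
      proof (rule ccontr)
        assume "i' \<notin> ?B" hence "i' \<in> ?A" using i by blast
        hence "f (i',j-1) \<in> V1" using vA j1 by blast
        moreover have "f (i,j-1) \<in> ?V2" using vB[OF iB j1'] .
        ultimately show False using e by simp
      qed
      have "g2 (i,j-1) = g2 (i',j-1)" using e fB[OF iB j1'] fB[OF i' j1'] by simp
      hence "g2 (i,j) = g2 (i',j)" by (rule G_c5[OF G2 iB i' j])
      thus ?thesis using fB[OF iB j(2)] fB[OF i' j(2)] by simp
    qed
  qed
  show "f \<in> Ms L d V" using fG leaf by (simp add: Ms_def)
  have Aeq: "Af L d v0 f = ?A"
  proof
    show "Af L d v0 f \<subseteq> ?A"
    proof
      fix l assume l: "l \<in> Af L d v0 f"
      hence lL: "l \<in> L" and fl: "f (l,d-1) = v0" by (auto simp: Af_def)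
      show "l \<in> ?A"
      proof (rule ccontr)
        assume "l \<notin> ?A" hence "l \<in> ?B" using lL by blast
        hence "f (l,d-1) \<in> ?V2" using vB d by simp
        thus False using fl by simp
      qed
    qed
    show "?A \<subseteq> Af L d v0 f" using fAv by (auto simp: Af_def)
  qed
  have "V1f L d v0 f = f ` (?A \<times> {0..<d-1})" unfolding V1f_def Aeq ..
  also have "\<dots> = g1 ` (?A \<times> {0..<d-1})"
  proof (rule image_cong[OF refl])
    fix x assume "x \<in> ?A \<times> {0..<d-1}"
    then obtain i j where "x = (i,j)" "i \<in> ?A" "j < d-1" by auto
    thus "f x = g1 x" using fA by simp
  qed
  also have "\<dots> = V1" using G_onto[OF G1] by (simp add: Ix_def)
  finally show "V1f L d v0 f = V1" .
  show "restrict f (Ix ?A (d-1)) = g1"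
  proof
    fix x :: "nat \<times> nat"
    show "restrict f (Ix ?A (d-1)) x = g1 x"
    proof (cases "x \<in> Ix ?A (d-1)")
      case True thus ?thesis using fA by (auto simp: Ix_def)
    next
      case False thus ?thesis using G_ext[OF G1 False] by simp
    qed
  qed
  show "restrict f (Ix ?B d) = g2"
  proof
    fix x :: "nat \<times> nat"
    show "restrict f (Ix ?B d) x = g2 x"
    proof (cases "x \<in> Ix ?B d")
      case True thus ?thesis using fB by (auto simp: Ix_def)
    next
      case False thus ?thesis using G_ext[OF G2 False] by simp
    qed
  qed
qed

lemma C_dec:
  assumes fL: "finite L"
  shows "card (Ms L d V) = (\<Sum>V1\<in>{V1. V1 \<subseteq> V - {v0} \<and> L \<inter> V1 \<noteq> {}}.
            card (Ms (L \<inter> V1) (d-1) V1) * card (Ms (L - V1) d (V - {v0} - V1)))"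
proof -
  let ?K = "{V1. V1 \<subseteq> V - {v0} \<and> L \<inter> V1 \<noteq> {}}"
  have fK: "finite ?K" using fV by simp
  have sub: "V1f L d v0 ` Ms L d V \<subseteq> ?K" using fwd_V1 by blast
  have "card (Ms L d V) = (\<Sum>V1\<in>?K. card {f \<in> Ms L d V. V1f L d v0 f = V1})"
    by (rule card_fibres[OF finite_Ms[OF fL fV] fK sub])
  also have "\<dots> = (\<Sum>V1\<in>?K. card (Ms (L \<inter> V1) (d-1) V1) * card (Ms (L - V1) d (V - {v0} - V1)))"
  proof (rule sum.cong[OF refl])
    fix V1 assume "V1 \<in> ?K"
    hence V1: "V1 \<subseteq> V - {v0}" and ne: "L \<inter> V1 \<noteq> {}" by auto
    let ?P = "Ms (L \<inter> V1) (d-1) V1 \<times> Ms (L - V1) d (V - {v0} - V1)"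
    have "bij_betw (\<lambda>f. (restrict f (Ix (L \<inter> V1) (d-1)), restrict f (Ix (L - V1) d)))
            {f \<in> Ms L d V. V1f L d v0 f = V1} ?P"
    proof (rule bij_betw_byWitness[where f'="\<lambda>p. comb (L \<inter> V1) (L - V1) d v0 (fst p) (snd p)"])
      show "\<forall>f\<in>{f \<in> Ms L d V. V1f L d v0 f = V1}.
          comb (L \<inter> V1) (L - V1) d v0 (fst (restrict f (Ix (L \<inter> V1) (d-1)), restrict f (Ix (L - V1) d)))
             (snd (restrict f (Ix (L \<inter> V1) (d-1)), restrict f (Ix (L - V1) d))) = f"
        using fwd_comb by auto
      show "\<forall>p\<in>?P. (restrict (comb (L \<inter> V1) (L - V1) d v0 (fst p) (snd p)) (Ix (L \<inter> V1) (d-1)),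
               restrict (comb (L \<inter> V1) (L - V1) d v0 (fst p) (snd p)) (Ix (L - V1) d)) = p"
        using bwd(3,4)[OF V1 ne] by auto
      show "(\<lambda>f. (restrict f (Ix (L \<inter> V1) (d-1)), restrict f (Ix (L - V1) d))) ` {f \<in> Ms L d V. V1f L d v0 f = V1} \<subseteq> ?P"
        using fwd_g1 fwd_g2 by auto
      show "(\<lambda>p. comb (L \<inter> V1) (L - V1) d v0 (fst p) (snd p)) ` ?P \<subseteq> {f \<in> Ms L d V. V1f L d v0 f = V1}"
        using bwd(1,2)[OF V1 ne] by auto
    qed
    hence "card {f \<in> Ms L d V. V1f L d v0 f = V1} = card ?P" by (rule bij_betw_same_card)
    thus "card {f \<in> Ms L d V. V1f L d v0 f = V1} = card (Ms (L \<inter> V1) (d-1) V1) * card (Ms (L - V1) d (V - {v0} - V1))"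
      by (simp add: card_cartesian_product)
  qed
  finally show ?thesis .
qed

lemma vanish:
  assumes "v0 \<in> L"
  shows "Ms L d V = {}"
proof (rule ccontr)
  assume "Ms L d V \<noteq> {}"
  then obtain f where f: "f \<in> Ms L d V" by blast
  note fb = fwd_basic[OF f]
  have "v0 < f (v0, 0)" using fb(3)[OF assms, of 0] d by simp
  thus False using fb(2)[OF assms] by simp
qed

end

lemma SB:
  assumes d: "0 < d" and fV: "finite V"
  shows "(\<Sum>L\<in>{L. L \<subseteq> V \<and> card L = j}. card (Ms L d V)) = P (card V) j d 1"
  using B_sum[OF d fV, of j] A1[OF d, of "card V" j] by simp

lemma pairing:
  fixes a b :: "nat set \<Rightarrow> nat"
  assumes fW: "finite W" and V1: "V1 \<subseteq> W"
  shows "(\<Sum>L\<in>{L. L \<subseteq> W \<and> card L = n}. (if L \<inter> V1 \<noteq> {} then a (L \<inter> V1) * b (L - V1) else 0))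
       = (\<Sum>j\<in>{1..n}. (\<Sum>L1\<in>{L1. L1 \<subseteq> V1 \<and> card L1 = j}. a L1) * (\<Sum>L2\<in>{L2. L2 \<subseteq> W - V1 \<and> card L2 = n - j}. b L2))"
proof -
  let ?S = "{L. L \<subseteq> W \<and> card L = n}"
  let ?h = "\<lambda>L. (if L \<inter> V1 \<noteq> {} then a (L \<inter> V1) * b (L - V1) else 0)"
  have fS: "finite ?S" using fW by simp
  have fV1: "finite V1" using fW V1 finite_subset by blast
  have sub: "(\<lambda>L. card (L \<inter> V1)) ` ?S \<subseteq> {0..n}"
  proof
    fix k assume "k \<in> (\<lambda>L. card (L \<inter> V1)) ` ?S"
    then obtain L where L: "L \<subseteq> W" "card L = n" "k = card (L \<inter> V1)" by blast
    have "finite L" using L fW finite_subset by blast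
    hence "card (L \<inter> V1) \<le> card L" by (simp add: card_mono)
    thus "k \<in> {0..n}" using L by simp
  qed
  have "(\<Sum>L\<in>?S. ?h L) = (\<Sum>k\<in>{0..n}. \<Sum>L\<in>{L \<in> ?S. card (L \<inter> V1) = k}. ?h L)"
    by (rule sum.group[OF fS _ sub, symmetric]; simp)
  also have "\<dots> = (\<Sum>k\<in>{1..n}. \<Sum>L\<in>{L \<in> ?S. card (L \<inter> V1) = k}. ?h L)"
  proof (rule sum.mono_neutral_right)
    show "finite {0..n}" by simp
    show "{1..n} \<subseteq> {0..n}" by auto
    show "\<forall>k\<in>{0..n} - {1..n}. (\<Sum>L\<in>{L \<in> ?S. card (L \<inter> V1) = k}. ?h L) = 0"
    proof
      fix k assume "k \<in> {0..n} - {1..n}"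
      hence k: "k = 0" by auto
      show "(\<Sum>L\<in>{L \<in> ?S. card (L \<inter> V1) = k}. ?h L) = 0"
      proof (rule sum.neutral, rule ballI)
        fix L assume "L \<in> {L \<in> ?S. card (L \<inter> V1) = k}"
        hence "card (L \<inter> V1) = 0" using k by simp
        hence "L \<inter> V1 = {}" using fV1 by simp
        thus "?h L = 0" by simp
      qed
    qed
  qed
  also have "\<dots> = (\<Sum>j\<in>{1..n}. (\<Sum>L1\<in>{L1. L1 \<subseteq> V1 \<and> card L1 = j}. a L1) * (\<Sum>L2\<in>{L2. L2 \<subseteq> W - V1 \<and> card L2 = n - j}. b L2))"
  proof (rule sum.cong[OF refl])
    fix j assume j: "j \<in> {1..n}"
    let ?X = "{L1. L1 \<subseteq> V1 \<and> card L1 = j}" and ?Y = "{L2. L2 \<subseteq> W - V1 \<and> card L2 = n - j}"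
    have "(\<Sum>L1\<in>?X. a L1) * (\<Sum>L2\<in>?Y. b L2) = (\<Sum>p\<in>?X \<times> ?Y. a (fst p) * b (snd p))"
      by (simp add: sum_product sum.cartesian_product case_prod_beta)
    also have "\<dots> = (\<Sum>L\<in>{L \<in> ?S. card (L \<inter> V1) = j}. ?h L)"
    proof (rule sum.reindex_bij_witness[where i="\<lambda>L. (L \<inter> V1, L - V1)" and j="\<lambda>p. fst p \<union> snd p"])
      fix p assume p: "p \<in> ?X \<times> ?Y"
      have s2: "fst p \<subseteq> V1" "snd p \<subseteq> W - V1" using p by auto
      hence "(fst p \<union> snd p) \<inter> V1 = fst p" "(fst p \<union> snd p) - V1 = snd p" by blast+
      thus "((fst p \<union> snd p) \<inter> V1, (fst p \<union> snd p) - V1) = p" by simp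
      have s1: "fst p \<subseteq> W" "snd p \<subseteq> W" using p V1 by auto
      have f1: "finite (fst p)" "finite (snd p)" using finite_subset[OF s1(1) fW] finite_subset[OF s1(2) fW] by auto
      have s2: "fst p \<subseteq> V1" "snd p \<subseteq> W - V1" using p by auto
      have dj: "fst p \<inter> snd p = {}" using s2 by blast
      have c: "card (fst p \<union> snd p) = n" using card_Un_disjoint[OF f1 dj] p j by auto
      have i1: "(fst p \<union> snd p) \<inter> V1 = fst p" using s2 by blast
      show "fst p \<union> snd p \<in> {L \<in> ?S. card (L \<inter> V1) = j}" using p c i1 V1 by auto
      have ne: "fst p \<noteq> {}" using p j by auto
      have i2: "(fst p \<union> snd p) - V1 = snd p" using s2 by blast
      show "?h (fst p \<union> snd p) = a (fst p) * b (snd p)" using i1 i2 ne by simp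
    next
      fix L assume L: "L \<in> {L \<in> ?S. card (L \<inter> V1) = j}"
      show "fst (L \<inter> V1, L - V1) \<union> snd (L \<inter> V1, L - V1) = L" by auto
      have "L \<subseteq> W" using L by simp
      hence fL: "finite L" using fW finite_subset by blast
      have "card L = card (L \<inter> V1) + card (L - V1)"
        using card_Un_disjoint[of "L \<inter> V1" "L - V1"] fL by (metis Int_Diff_Un Int_Diff_disjoint finite_Diff finite_Int)
      hence "card (L - V1) = n - j" using L by auto
      thus "(L \<inter> V1, L - V1) \<in> ?X \<times> ?Y" using L by auto
    qed
    finally show "(\<Sum>L\<in>{L \<in> ?S. card (L \<inter> V1) = j}. ?h L) = (\<Sum>L1\<in>?X. a L1) * (\<Sum>L2\<in>?Y. b L2)" by simp
  qed
  finally show ?thesis .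
qed

lemma group_card:
  fixes F :: "nat \<Rightarrow> nat \<Rightarrow> nat"
  assumes fW: "finite W"
  shows "(\<Sum>V1\<in>Pow W. F (card V1) (card (W - V1))) = (\<Sum>i=0..card W. (card W choose i) * F i (card W - i))"
proof -
  have sub: "card ` Pow W \<subseteq> {0..card W}" using fW by (auto simp: card_mono)
  have "(\<Sum>V1\<in>Pow W. F (card V1) (card (W - V1))) = (\<Sum>i\<in>{0..card W}. \<Sum>V1\<in>{V1 \<in> Pow W. card V1 = i}. F (card V1) (card (W - V1)))"
    by (rule sum.group[OF _ _ sub, symmetric]; use fW in simp)
  also have "\<dots> = (\<Sum>i=0..card W. (card W choose i) * F i (card W - i))"
  proof (rule sum.cong[OF refl])
    fix i assume "i \<in> {0..card W}"
    have "(\<Sum>V1\<in>{V1 \<in> Pow W. card V1 = i}. F (card V1) (card (W - V1))) = (\<Sum>V1\<in>{V1 \<in> Pow W. card V1 = i}. F i (card W - i))"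
    proof (rule sum.cong[OF refl])
      fix V1 assume "V1 \<in> {V1 \<in> Pow W. card V1 = i}"
      hence "V1 \<subseteq> W" "card V1 = i" by auto
      moreover have "finite V1" using \<open>V1 \<subseteq> W\<close> fW finite_subset by blast
      ultimately show "F (card V1) (card (W - V1)) = F i (card W - i)" by (simp add: card_Diff_subset)
    qed
    also have "\<dots> = card {V1 \<in> Pow W. card V1 = i} * F i (card W - i)" by simp
    also have "card {V1 \<in> Pow W. card V1 = i} = card W choose i"
      using n_subsets[OF fW, of i] by (simp add: Pow_def)
    finally show "(\<Sum>V1\<in>{V1 \<in> Pow W. card V1 = i}. F (card V1) (card (W - V1))) = (card W choose i) * F i (card W - i)" .
  qed
  finally show ?thesis .
qed

lemma recur:
  assumes d: "2 \<le> d" and n: "1 \<le> n" and p: "1 \<le> p"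
  shows "P p n d 1 = (\<Sum>j = 1..n. \<Sum>i = 0..p-1.
          (p - 1 choose i) * P i j (d - 1) 1 * P (p - 1 - i) (n - j) d 1)"
proof -
  define V where "V = {0..<p}"
  define W where "W = V - {0}"
  have fV: "finite V" and fW: "finite W" by (simp_all add: V_def W_def)
  have v0: "(0::nat) \<in> V" using p by (simp add: V_def)
  have vmin: "\<forall>v\<in>V. (0::nat) \<le> v" by simp
  have cV: "card V = p" by (simp add: V_def)
  have cW: "card W = p - 1" using v0 cV by (simp add: W_def)
  have d0: "0 < d" "0 < d - 1" using d by auto
  define m1 where "m1 A V1 = card (Ms A (d-1) V1)" for A V1
  define m2 where "m2 B V2 = card (Ms B d V2)" for B V2
  let ?SV = "{L. L \<subseteq> V \<and> card L = n}" and ?SW = "{L. L \<subseteq> W \<and> card L = n}"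
  have "P p n d 1 = (\<Sum>L\<in>?SV. card (Ms L d V))" using SB[OF d0(1) fV, of n] cV by simp
  also have "\<dots> = (\<Sum>L\<in>?SW. card (Ms L d V))"
  proof (rule sum.mono_neutral_right)
    show "finite ?SV" using fV by simp
    show "?SW \<subseteq> ?SV" by (auto simp: W_def)
    show "\<forall>L\<in>?SV - ?SW. card (Ms L d V) = 0"
    proof
      fix L assume "L \<in> ?SV - ?SW"
      hence "0 \<in> L" by (auto simp: W_def)
      thus "card (Ms L d V) = 0" using vanish[OF d fV v0 vmin] by simp
    qed
  qed
  also have "\<dots> = (\<Sum>L\<in>?SW. \<Sum>V1\<in>Pow W. (if L \<inter> V1 \<noteq> {} then m1 (L \<inter> V1) V1 * m2 (L - V1) (W - V1) else 0))"
  proof (rule sum.cong[OF refl])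
    fix L assume L: "L \<in> ?SW"
    have fL: "finite L" using L fW finite_subset by blast
    have "card (Ms L d V) = (\<Sum>V1\<in>{V1. V1 \<subseteq> V - {0} \<and> L \<inter> V1 \<noteq> {}}.
            card (Ms (L \<inter> V1) (d-1) V1) * card (Ms (L - V1) d (V - {0} - V1)))"
      by (rule C_dec[OF d fV v0 vmin fL])
    also have "\<dots> = (\<Sum>V1\<in>{V1 \<in> Pow W. L \<inter> V1 \<noteq> {}}. m1 (L \<inter> V1) V1 * m2 (L - V1) (W - V1))"
      by (rule sum.cong) (auto simp: W_def m1_def m2_def)
    also have "\<dots> = (\<Sum>V1\<in>Pow W. (if L \<inter> V1 \<noteq> {} then m1 (L \<inter> V1) V1 * m2 (L - V1) (W - V1) else 0))"
      by (rule sum.inter_filter) (simp add: fW)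
    finally show "card (Ms L d V) = \<dots>" .
  qed
  also have "\<dots> = (\<Sum>V1\<in>Pow W. \<Sum>L\<in>?SW. (if L \<inter> V1 \<noteq> {} then m1 (L \<inter> V1) V1 * m2 (L - V1) (W - V1) else 0))"
    by (rule sum.swap)
  also have "\<dots> = (\<Sum>V1\<in>Pow W. (\<lambda>a b. \<Sum>j=1..n. P a j (d-1) 1 * P b (n-j) d 1) (card V1) (card (W - V1)))"
  proof (rule sum.cong[OF refl])
    fix V1 assume "V1 \<in> Pow W"
    hence V1: "V1 \<subseteq> W" by simp
    have fV1: "finite V1" "finite (W - V1)" using V1 fW finite_subset by auto
    have "(\<Sum>L\<in>?SW. (if L \<inter> V1 \<noteq> {} then m1 (L \<inter> V1) V1 * m2 (L - V1) (W - V1) else 0))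
       = (\<Sum>j\<in>{1..n}. (\<Sum>L1\<in>{L1. L1 \<subseteq> V1 \<and> card L1 = j}. m1 L1 V1) * (\<Sum>L2\<in>{L2. L2 \<subseteq> W - V1 \<and> card L2 = n - j}. m2 L2 (W - V1)))"
      by (rule pairing[OF fW V1])
    also have "\<dots> = (\<Sum>j=1..n. P (card V1) j (d-1) 1 * P (card (W - V1)) (n-j) d 1)"
      using SB[OF d0(2) fV1(1)] SB[OF d0(1) fV1(2)] by (simp add: m1_def m2_def)
    finally show "(\<Sum>L\<in>?SW. (if L \<inter> V1 \<noteq> {} then m1 (L \<inter> V1) V1 * m2 (L - V1) (W - V1) else 0))
       = (\<lambda>a b. \<Sum>j=1..n. P a j (d-1) 1 * P b (n-j) d 1) (card V1) (card (W - V1))" by simp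
  qed
  also have "\<dots> = (\<Sum>i=0..card W. (card W choose i) * (\<lambda>a b. \<Sum>j=1..n. P a j (d-1) 1 * P b (n-j) d 1) i (card W - i))"
    by (rule group_card[OF fW])
  also have "\<dots> = (\<Sum>i=0..p-1. \<Sum>j=1..n. (p - 1 choose i) * P i j (d - 1) 1 * P (p - 1 - i) (n - j) d 1)"
    by (simp add: cW sum_distrib_left mult.assoc)
  also have "\<dots> = (\<Sum>j = 1..n. \<Sum>i = 0..p-1. (p - 1 choose i) * P i j (d - 1) 1 * P (p - 1 - i) (n - j) d 1)"
    by (rule sum.swap)
  finally show ?thesis .
qed

lemma case_f:
  assumes d: "2 \<le> d" and n: "1 \<le> n"
  shows "P 0 n d 1 = 0"
proof -
  have "Gs {1..n} d {0..<0} = {}"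
  proof (rule ccontr)
    assume "Gs {1..n} d {0..<0} \<noteq> {}"
    then obtain f where f: "G {1..n} d {0..<0} f" by (auto simp: Gs_def)
    have "(1,0) \<in> Ix {1..n} d" using n d by (simp add: Ix_def)
    hence "f (1,0) \<in> f ` Ix {1..n} d" by blast
    thus False using G_onto[OF f] by simp
  qed
  thus ?thesis using A1[of d 0 n] d by simp
qed

lemma Ms_d1:
  assumes fV: "finite V"
  shows "card (Ms L 1 V) = (if L = V then 1 else 0)"
proof (cases "L = V")
  case False
  have "Ms L 1 V = {}"
  proof (rule ccontr)
    assume "Ms L 1 V \<noteq> {}"
    then obtain f where f: "G L 1 V f" "\<forall>l\<in>L. f (l,0) = l" by (auto simp: Ms_def)
    have "Ix L 1 = (\<lambda>l. (l,0)) ` L" by (auto simp: Ix_def)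
    hence "f ` Ix L 1 = (\<lambda>l. f (l,0)) ` L" by (simp add: image_image)
    also have "\<dots> = L" using f(2) by simp
    finally show False using G_onto[OF f(1)] False by simp
  qed
  thus ?thesis using False by simp
next
  case True
  define h where "h = restrict (\<lambda>x. fst x) (Ix V 1)"
  have hv: "\<And>l. l \<in> V \<Longrightarrow> h (l,0) = l" by (simp add: h_def Ix_def)
  have I1: "Ix V 1 = (\<lambda>l. (l,0)) ` V" by (auto simp: Ix_def)
  have hG: "G V 1 V h"
  proof (rule GI)
    show "h \<in> Ix V 1 \<rightarrow>\<^sub>E V" by (auto simp: h_def Ix_def)
    show "h ` Ix V 1 = V" unfolding I1 image_image using hv by simp
    show "\<And>i i'. i \<in> V \<Longrightarrow> i' \<in> V \<Longrightarrow> i < i' \<Longrightarrow> h (i,0) < h (i',0)" using hv by simp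
    show "\<And>i j j'. i \<in> V \<Longrightarrow> j < 1 \<Longrightarrow> j' < j \<Longrightarrow> h (i,j) < h (i,j')" by simp
    show "\<And>i i' j j'. i \<in> V \<Longrightarrow> i' \<in> V \<Longrightarrow> j < 1 \<Longrightarrow> j' < 1 \<Longrightarrow> h (i,j) = h (i',j') \<Longrightarrow> j = j'" by simp
    show "\<And>i i' j. i \<in> V \<Longrightarrow> i' \<in> V \<Longrightarrow> 0 < j \<Longrightarrow> j < 1 \<Longrightarrow> h (i,j-1) = h (i',j-1) \<Longrightarrow> h (i,j) = h (i',j)" by simp
  qed
  have "Ms L 1 V = {h}"
  proof
    show "{h} \<subseteq> Ms L 1 V" using hG hv True by (simp add: Ms_def)
    show "Ms L 1 V \<subseteq> {h}"
    proof
      fix f assume "f \<in> Ms L 1 V"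
      hence f: "G V 1 V f" "\<forall>l\<in>V. f (l,0) = l" using True by (auto simp: Ms_def)
      have "f = h"
      proof
        fix x :: "nat \<times> nat"
        show "f x = h x"
        proof (cases "x \<in> Ix V 1")
          case True
          then obtain l where "x = (l,0)" "l \<in> V" by (auto simp: Ix_def)
          thus ?thesis using f(2) hv by simp
        next
          case False
          thus ?thesis using G_ext[OF f(1) False] by (simp add: h_def)
        qed
      qed
      thus "f \<in> {h}" by simp
    qed
  qed
  thus ?thesis using True by simp
qed

lemma case_e:
  assumes n: "1 \<le> n"
  shows "P p n 1 1 = (if n = p then 1 else 0)"
proof -
  have "P p n 1 1 = card (Gs {1..n} 1 {0..<p})" by (rule A1) simp
  also have "\<dots> = (\<Sum>L\<in>{L. L \<subseteq> {0..<p} \<and> card L = n}. card (Ms L 1 {0..<p}))"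
    using A2[of 1 "{1..n}" "{0..<p}"] by simp
  also have "\<dots> = (\<Sum>L\<in>{L. L \<subseteq> {0..<p} \<and> card L = n}. (if L = {0..<p} then 1 else 0))"
    using Ms_d1 by simp
  also have "\<dots> = (if n = p then 1 else 0)"
  proof (cases "n = p")
    case True
    have "{0..<p} \<in> {L. L \<subseteq> {0..<p} \<and> card L = n}" using True by simp
    thus ?thesis using True by (simp add: sum.delta)
  next
    case False
    have "(\<Sum>L\<in>{L. L \<subseteq> {0..<p} \<and> card L = n}. (if L = {0..<p} then 1 else 0)) = (0::nat)"
      by (rule sum.neutral) (use False in auto)
    thus ?thesis using False by simp
  qed
  finally show ?thesis .
qed

lemma case_n0:
  shows "P p 0 d 1 = (if p = 0 then 1 else 0)"
proof -
  have I: "CR_index 0 d = {}" by (simp add: CR_index_def)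
  have "{(Y, R). is_CR 0 d 1 Y R \<and> CR_size 0 d R = p} = (if p = 0 then {(\<lambda>_. undefined, {})} else {})"
  proof (intro set_eqI iffI)
    fix z assume "z \<in> {(Y, R). is_CR 0 d 1 Y R \<and> CR_size 0 d R = p}"
    then obtain Y R where z: "z = (Y,R)" "is_CR 0 d 1 Y R" "CR_size 0 d R = p" by blast
    have "Y \<in> {1..0} \<rightarrow>\<^sub>E {0..<1}" "R \<subseteq> CR_index 0 d \<times> CR_index 0 d"
      using z(2) unfolding is_CR_def Let_def by - (elim conjE, assumption)+
    hence "Y = (\<lambda>_. undefined)" "R = {}" using I by auto
    moreover have "p = 0" using z(3) \<open>R = {}\<close> I by (simp add: CR_size_def)
    ultimately show "z \<in> (if p = 0 then {(\<lambda>_. undefined, {})} else {})" using z by simp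
  next
    fix z :: "(nat \<Rightarrow> nat) \<times> ((nat \<times> nat) \<times> (nat \<times> nat)) set" assume z: "z \<in> (if p = 0 then {(\<lambda>_. undefined, {})} else {})"
    hence p0: "p = 0" and zz: "z = (\<lambda>_. undefined, {})" by (auto split: if_splits)
    have "is_CR 0 d 1 (\<lambda>_. undefined) {}"
      unfolding is_CR_def Let_def I by (simp add: refl_on_def total_on_def restrict_def)
    moreover have "CR_size 0 d {} = 0" by (simp add: CR_size_def I)
    ultimately show "z \<in> {(Y, R). is_CR 0 d 1 Y R \<and> CR_size 0 d R = p}" using p0 zz by simp
  qed
  thus ?thesis unfolding P_def by simp
qed

lemma case_d0:
  assumes n: "1 \<le> n"
  shows "P p n 0 1 = (if n = 1 \<and> p = 0 then 1 else 0)"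
proof -
  have I: "CR_index n 0 = {}" by (simp add: CR_index_def)
  have "{(Y, R). is_CR n 0 1 Y R \<and> CR_size n 0 R = p} = (if n = 1 \<and> p = 0 then {(Y0 1, {})} else {})"
  proof (intro set_eqI iffI)
    fix z assume "z \<in> {(Y, R). is_CR n 0 1 Y R \<and> CR_size n 0 R = p}"
    then obtain Y R where z: "z = (Y,R)" "is_CR n 0 1 Y R" "CR_size n 0 R = p" by blast
    have h: "Y \<in> {1..n} \<rightarrow>\<^sub>E {0..<1}" "R \<subseteq> CR_index n 0 \<times> CR_index n 0"
      "(0::nat) = 0 \<longrightarrow> (\<forall>i\<in>{1..n}. \<forall>i'\<in>{1..n}. i < i' \<longrightarrow> Y i < Y i')"
      using z(2) unfolding is_CR_def Let_def by - (elim conjE, assumption)+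
    have n1: "n = 1"
    proof (rule ccontr)
      assume "n \<noteq> 1" hence "2 \<le> n" using n by simp
      hence m: "(1::nat) \<in> {1..n}" "(2::nat) \<in> {1..n}" by auto
      have all: "\<forall>i\<in>{1..n}. \<forall>i'\<in>{1..n}. i < i' \<longrightarrow> Y i < Y i'" using h(3) by simp
      have "Y 1 < Y 2" using bspec[OF bspec[OF all m(1)] m(2)] by simp
      moreover have "Y 1 \<in> {0..<1}" "Y 2 \<in> {0..<1}" using PiE_mem[OF h(1) m(1)] PiE_mem[OF h(1) m(2)] by auto
      ultimately show False by simp
    qed
    have "Y = Y0 n" using h(1) Y_PiE by blast
    moreover have "R = {}" using h(2) I by auto
    moreover have "p = 0" using z(3) \<open>R = {}\<close> I by (simp add: CR_size_def)
    ultimately show "z \<in> (if n = 1 \<and> p = 0 then {(Y0 1, {})} else {})" using z n1 by simp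
  next
    fix z :: "(nat \<Rightarrow> nat) \<times> ((nat \<times> nat) \<times> (nat \<times> nat)) set" assume z: "z \<in> (if n = 1 \<and> p = 0 then {(Y0 1, {})} else {})"
    hence p0: "p = 0" "n = 1" and zz: "z = (Y0 1, {})" by (auto split: if_splits)
    have "Y0 1 \<in> {1..1} \<rightarrow>\<^sub>E {0..<1::nat}" using Y_PiE by blast
    hence "is_CR 1 0 1 (Y0 1) {}"
      unfolding is_CR_def Let_def by (simp add: CR_index_def refl_on_def total_on_def)
    moreover have "CR_size 1 0 {} = 0" by (simp add: CR_size_def CR_index_def)
    ultimately show "z \<in> {(Y, R). is_CR n 0 1 Y R \<and> CR_size n 0 R = p}" using p0 zz by simp
  qed
  thus ?thesis unfolding P_def by simp
qed

theorem lemma8p1: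
  fixes n d p :: nat
  shows
   "(d = 0 \<and> n \<ge> 2 \<longrightarrow> P p n d 1 = 0)
  \<and> (n = 0 \<and> p = 0 \<longrightarrow> P p n d 1 = 1)
  \<and> (n = 0 \<and> p \<ge> 1 \<longrightarrow> P p n d 1 = 0)
  \<and> (d = 0 \<and> n = 1 \<and> p = 0 \<longrightarrow> P p n d 1 = 1)
  \<and> (d = 0 \<and> n = 1 \<and> p \<ge> 1 \<longrightarrow> P p n d 1 = 0)
  \<and> (d = 1 \<and> n \<ge> 1 \<and> n = p \<longrightarrow> P p n d 1 = 1)
  \<and> (d = 1 \<and> n \<ge> 1 \<and> n \<noteq> p \<longrightarrow> P p n d 1 = 0)
  \<and> (d \<ge> 2 \<and> n \<ge> 1 \<and> p = 0 \<longrightarrow> P p n d 1 = 0)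
  \<and> (d \<ge> 2 \<and> n \<ge> 1 \<and> p \<ge> 1 \<longrightarrow>
       P p n d 1 = (\<Sum>j = 1..n. \<Sum>i = 0..p-1.
          (p - 1 choose i) * P i j (d - 1) 1 * P (p - 1 - i) (n - j) d 1))"
proof (intro conjI impI)
  show "d = 0 \<and> n \<ge> 2 \<Longrightarrow> P p n d 1 = 0" using case_d0[of n p] by auto
  show "n = 0 \<and> p = 0 \<Longrightarrow> P p n d 1 = 1" using case_n0[of p d] by auto
  show "n = 0 \<and> p \<ge> 1 \<Longrightarrow> P p n d 1 = 0" using case_n0[of p d] by auto
  show "d = 0 \<and> n = 1 \<and> p = 0 \<Longrightarrow> P p n d 1 = 1" using case_d0[of n p] by auto
  show "d = 0 \<and> n = 1 \<and> p \<ge> 1 \<Longrightarrow> P p n d 1 = 0" using case_d0[of n p] by auto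
  show "d = 1 \<and> n \<ge> 1 \<and> n = p \<Longrightarrow> P p n d 1 = 1" using case_e[of n p] by auto
  show "d = 1 \<and> n \<ge> 1 \<and> n \<noteq> p \<Longrightarrow> P p n d 1 = 0" using case_e[of n p] by auto
  show "d \<ge> 2 \<and> n \<ge> 1 \<and> p = 0 \<Longrightarrow> P p n d 1 = 0" using case_f[of d n] by auto
  show "d \<ge> 2 \<and> n \<ge> 1 \<and> p \<ge> 1 \<Longrightarrow> P p n d 1 = (\<Sum>j = 1..n. \<Sum>i = 0..p-1.
          (p - 1 choose i) * P i j (d - 1) 1 * P (p - 1 - i) (n - j) d 1)"
    using recur[of d n p] by auto
qed

end
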